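(* Every weakly purely infinite $C^*$-algebra is nowhere scattered.
   Context: For positive elements $a,b$ in a $C^*$-algebra $A$, write $a\precsim b$ (Cuntz subequivalence) if $a=\lim_n r_nbr_n^*$ for some sequence $(r_n)_n\subseteq A$, and $a\sim b$ if $a\precsim b$ and $b\precsim a$. For $a\in A_+$ and $n\in\mathbb{N}$, $a^{\oplus n}$ denotes the diagonal matrix $\mathrm{diag}(a,\ldots,a)\in M_n(A)$, and $M_n(A)$ is viewed inside $M_{n+1}(A)$ in the upper-left corner. $A$ is $n$-weakly purely infinite if $a^{\oplus n}\sim a^{\oplus(n+1)}$ in $M_{n+1}(A)$ for every $a\in A_+$; $A$ is weakly purely infinite if it is $n$-weakly purely infinite for some $n\geq 1$. A $C^*$-algebra is nowhere scattered if it has no nonzero ideal-quotient $I/J$ (with $J\subseteq I\subseteq A$ closed two-sided ideals) that is isomorphic to the compact operators on some Hilbert space. *)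

theory Defs
  imports Complex_Main
begin

record 'a cstar_data =
  cs_carrier :: "'a set"
  cs_zero :: 'a
  cs_add :: "'a \<Rightarrow> 'a \<Rightarrow> 'a"
  cs_scale :: "complex \<Rightarrow> 'a \<Rightarrow> 'a"
  cs_mult :: "'a \<Rightarrow> 'a \<Rightarrow> 'a"
  cs_star :: "'a \<Rightarrow> 'a"
  cs_norm :: "'a \<Rightarrow> real"

definition cs_sub :: "'a cstar_data \<Rightarrow> 'a \<Rightarrow> 'a \<Rightarrow> 'a" where
  "cs_sub A a b = cs_add A a (cs_scale A (-1) b)"

definition cs_lim :: "'a cstar_data \<Rightarrow> (nat \<Rightarrow> 'a) \<Rightarrow> 'a \<Rightarrow> bool" where
  "cs_lim A f a \<longleftrightarrow> (\<lambda>k. cs_norm A (cs_sub A (f k) a)) \<longlonglongrightarrow> 0"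

definition cstar_algebra :: "'a cstar_data \<Rightarrow> bool" where
  "cstar_algebra A \<longleftrightarrow>
    (let X = cs_carrier A; z = cs_zero A; p = cs_add A; s = cs_scale A;
         m = cs_mult A; st = cs_star A; nm = cs_norm A in
     z \<in> X \<and>
     (\<forall>a\<in>X. \<forall>b\<in>X. p a b \<in> X \<and> m a b \<in> X) \<and>
     (\<forall>c. \<forall>a\<in>X. s c a \<in> X) \<and>
     (\<forall>a\<in>X. st a \<in> X) \<and>
     \<comment> \<open>complex vector space\<close>
     (\<forall>a\<in>X. \<forall>b\<in>X. \<forall>c\<in>X. p (p a b) c = p a (p b c)) \<and>
     (\<forall>a\<in>X. \<forall>b\<in>X. p a b = p b a) \<and>
     (\<forall>a\<in>X. p z a = a) \<and>
     (\<forall>a\<in>X. p a (s (-1) a) = z) \<and>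
     (\<forall>c. \<forall>a\<in>X. \<forall>b\<in>X. s c (p a b) = p (s c a) (s c b)) \<and>
     (\<forall>c d. \<forall>a\<in>X. s (c + d) a = p (s c a) (s d a)) \<and>
     (\<forall>c d. \<forall>a\<in>X. s (c * d) a = s c (s d a)) \<and>
     (\<forall>a\<in>X. s 1 a = a) \<and>
     \<comment> \<open>associative algebra\<close>
     (\<forall>a\<in>X. \<forall>b\<in>X. \<forall>c\<in>X. m (m a b) c = m a (m b c)) \<and>
     (\<forall>a\<in>X. \<forall>b\<in>X. \<forall>c\<in>X. m a (p b c) = p (m a b) (m a c)) \<and>
     (\<forall>a\<in>X. \<forall>b\<in>X. \<forall>c\<in>X. m (p a b) c = p (m a c) (m b c)) \<and>
     (\<forall>c. \<forall>a\<in>X. \<forall>b\<in>X. s c (m a b) = m (s c a) b \<and> s c (m a b) = m a (s c b)) \<and>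
     \<comment> \<open>involution\<close>
     (\<forall>a\<in>X. st (st a) = a) \<and>
     (\<forall>a\<in>X. \<forall>b\<in>X. st (p a b) = p (st a) (st b)) \<and>
     (\<forall>c. \<forall>a\<in>X. st (s c a) = s (cnj c) (st a)) \<and>
     (\<forall>a\<in>X. \<forall>b\<in>X. st (m a b) = m (st b) (st a)) \<and>
     \<comment> \<open>norm, submultiplicativity, C*-identity\<close>
     (\<forall>a\<in>X. nm a \<ge> 0 \<and> (nm a = 0 \<longleftrightarrow> a = z)) \<and>
     (\<forall>a\<in>X. \<forall>b\<in>X. nm (p a b) \<le> nm a + nm b) \<and>
     (\<forall>c. \<forall>a\<in>X. nm (s c a) = cmod c * nm a) \<and>
     (\<forall>a\<in>X. \<forall>b\<in>X. nm (m a b) \<le> nm a * nm b) \<and>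
     (\<forall>a\<in>X. nm (m (st a) a) = (nm a)\<^sup>2) \<and>
     \<comment> \<open>completeness\<close>
     (\<forall>f :: nat \<Rightarrow> _. (\<forall>k. f k \<in> X) \<and>
          (\<forall>e>0. \<exists>N. \<forall>i\<ge>N. \<forall>j\<ge>N. nm (cs_sub A (f i) (f j)) < e)
          \<longrightarrow> (\<exists>a\<in>X. cs_lim A f a)))"

definition cs_pos :: "'a cstar_data \<Rightarrow> 'a \<Rightarrow> bool" where
  "cs_pos A a \<longleftrightarrow> a \<in> cs_carrier A \<and> (\<exists>x\<in>cs_carrier A. a = cs_mult A (cs_star A x) x)"

primrec cs_sum :: "'a cstar_data \<Rightarrow> (nat \<Rightarrow> 'a) \<Rightarrow> nat \<Rightarrow> 'a" where
  "cs_sum A f 0 = cs_zero A"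
| "cs_sum A f (Suc n) = cs_add A (cs_sum A f n) (f n)"

text \<open>An element of M_n(A) is represented by a function nat => nat => 'a,
  only the entries with indices below n are relevant.\<close>
definition mat_in :: "'a cstar_data \<Rightarrow> nat \<Rightarrow> (nat \<Rightarrow> nat \<Rightarrow> 'a) \<Rightarrow> bool" where
  "mat_in A n x \<longleftrightarrow> (\<forall>i<n. \<forall>j<n. x i j \<in> cs_carrier A)"

definition mat_mult :: "'a cstar_data \<Rightarrow> nat \<Rightarrow> (nat \<Rightarrow> nat \<Rightarrow> 'a) \<Rightarrow> (nat \<Rightarrow> nat \<Rightarrow> 'a) \<Rightarrow> nat \<Rightarrow> nat \<Rightarrow> 'a" where
  "mat_mult A n x y = (\<lambda>i j. cs_sum A (\<lambda>l. cs_mult A (x i l) (y l j)) n)"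

definition mat_adj :: "'a cstar_data \<Rightarrow> (nat \<Rightarrow> nat \<Rightarrow> 'a) \<Rightarrow> nat \<Rightarrow> nat \<Rightarrow> 'a" where
  "mat_adj A x = (\<lambda>i j. cs_star A (x j i))"

text \<open>Norm convergence in M_n(A). All C*-norm topologies on M_n(A) coincide with
  entrywise convergence (||x_ij|| <= ||x|| <= sum ||x_ij||).\<close>
definition mat_lim :: "'a cstar_data \<Rightarrow> nat \<Rightarrow> (nat \<Rightarrow> nat \<Rightarrow> nat \<Rightarrow> 'a) \<Rightarrow> (nat \<Rightarrow> nat \<Rightarrow> 'a) \<Rightarrow> bool" where
  "mat_lim A n f x \<longleftrightarrow> (\<forall>i<n. \<forall>j<n. cs_lim A (\<lambda>k. f k i j) (x i j))"

definition cuntz_le :: "'a cstar_data \<Rightarrow> nat \<Rightarrow> (nat \<Rightarrow> nat \<Rightarrow> 'a) \<Rightarrow> (nat \<Rightarrow> nat \<Rightarrow> 'a) \<Rightarrow> bool" where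
  "cuntz_le A n a b \<longleftrightarrow>
     (\<exists>r. (\<forall>k. mat_in A n (r k)) \<and>
          mat_lim A n (\<lambda>k. mat_mult A n (mat_mult A n (r k) b) (mat_adj A (r k))) a)"

definition cuntz_eq :: "'a cstar_data \<Rightarrow> nat \<Rightarrow> (nat \<Rightarrow> nat \<Rightarrow> 'a) \<Rightarrow> (nat \<Rightarrow> nat \<Rightarrow> 'a) \<Rightarrow> bool" where
  "cuntz_eq A n a b \<longleftrightarrow> cuntz_le A n a b \<and> cuntz_le A n b a"

text \<open>a^{\<oplus>m} = diag(a,...,a) (m copies), embedded in the upper-left corner.\<close>
definition diag_rep :: "'a cstar_data \<Rightarrow> nat \<Rightarrow> 'a \<Rightarrow> nat \<Rightarrow> nat \<Rightarrow> 'a" where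
  "diag_rep A m a = (\<lambda>i j. if i = j \<and> i < m then a else cs_zero A)"

definition n_weakly_purely_infinite :: "'a cstar_data \<Rightarrow> nat \<Rightarrow> bool" where
  "n_weakly_purely_infinite A n \<longleftrightarrow>
     (\<forall>a. cs_pos A a \<longrightarrow> cuntz_eq A (n + 1) (diag_rep A n a) (diag_rep A (n + 1) a))"

definition weakly_purely_infinite :: "'a cstar_data \<Rightarrow> bool" where
  "weakly_purely_infinite A \<longleftrightarrow> (\<exists>n\<ge>1. n_weakly_purely_infinite A n)"

definition closed_ideal :: "'a cstar_data \<Rightarrow> 'a set \<Rightarrow> bool" where
  "closed_ideal A I \<longleftrightarrow>
     I \<subseteq> cs_carrier A \<and> cs_zero A \<in> I \<and>
     (\<forall>a\<in>I. \<forall>b\<in>I. cs_add A a b \<in> I) \<and>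
     (\<forall>c. \<forall>a\<in>I. cs_scale A c a \<in> I) \<and>
     (\<forall>a\<in>I. \<forall>x\<in>cs_carrier A. cs_mult A x a \<in> I \<and> cs_mult A a x \<in> I) \<and>
     (\<forall>(f :: nat \<Rightarrow> 'a) a. (\<forall>k. f k \<in> I) \<and> a \<in> cs_carrier A \<and> cs_lim A f a \<longrightarrow> a \<in> I)"

record 'h hilbert_data =
  hs_carrier :: "'h set"
  hs_zero :: 'h
  hs_add :: "'h \<Rightarrow> 'h \<Rightarrow> 'h"
  hs_scale :: "complex \<Rightarrow> 'h \<Rightarrow> 'h"
  hs_inner :: "'h \<Rightarrow> 'h \<Rightarrow> complex"

definition hs_norm :: "'h hilbert_data \<Rightarrow> 'h \<Rightarrow> real" where
  "hs_norm H x = sqrt (Re (hs_inner H x x))"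

definition hs_sub :: "'h hilbert_data \<Rightarrow> 'h \<Rightarrow> 'h \<Rightarrow> 'h" where
  "hs_sub H x y = hs_add H x (hs_scale H (-1) y)"

definition hs_lim :: "'h hilbert_data \<Rightarrow> (nat \<Rightarrow> 'h) \<Rightarrow> 'h \<Rightarrow> bool" where
  "hs_lim H f x \<longleftrightarrow> (\<lambda>k. hs_norm H (hs_sub H (f k) x)) \<longlonglongrightarrow> 0"

definition hilbert_space :: "'h hilbert_data \<Rightarrow> bool" where
  "hilbert_space H \<longleftrightarrow>
    (let X = hs_carrier H; z = hs_zero H; p = hs_add H; s = hs_scale H; ip = hs_inner H in
     z \<in> X \<and>
     (\<forall>a\<in>X. \<forall>b\<in>X. p a b \<in> X) \<and>
     (\<forall>c. \<forall>a\<in>X. s c a \<in> X) \<and>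
     (\<forall>a\<in>X. \<forall>b\<in>X. \<forall>c\<in>X. p (p a b) c = p a (p b c)) \<and>
     (\<forall>a\<in>X. \<forall>b\<in>X. p a b = p b a) \<and>
     (\<forall>a\<in>X. p z a = a) \<and>
     (\<forall>a\<in>X. p a (s (-1) a) = z) \<and>
     (\<forall>c. \<forall>a\<in>X. \<forall>b\<in>X. s c (p a b) = p (s c a) (s c b)) \<and>
     (\<forall>c d. \<forall>a\<in>X. s (c + d) a = p (s c a) (s d a)) \<and>
     (\<forall>c d. \<forall>a\<in>X. s (c * d) a = s c (s d a)) \<and>
     (\<forall>a\<in>X. s 1 a = a) \<and>
     \<comment> \<open>inner product: linear in the first, conjugate symmetric, positive definite\<close>
     (\<forall>a\<in>X. \<forall>b\<in>X. \<forall>c\<in>X. ip (p a b) c = ip a c + ip b c) \<and>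
     (\<forall>k. \<forall>a\<in>X. \<forall>b\<in>X. ip (s k a) b = k * ip a b) \<and>
     (\<forall>a\<in>X. \<forall>b\<in>X. ip b a = cnj (ip a b)) \<and>
     (\<forall>a\<in>X. Im (ip a a) = 0 \<and> Re (ip a a) \<ge> 0 \<and> (ip a a = 0 \<longleftrightarrow> a = z)) \<and>
     \<comment> \<open>completeness\<close>
     (\<forall>f :: nat \<Rightarrow> _. (\<forall>k. f k \<in> X) \<and>
          (\<forall>e>0. \<exists>N. \<forall>i\<ge>N. \<forall>j\<ge>N. hs_norm H (hs_sub H (f i) (f j)) < e)
          \<longrightarrow> (\<exists>x\<in>X. hs_lim H f x)))"

definition compact_op :: "'h hilbert_data \<Rightarrow> ('h \<Rightarrow> 'h) \<Rightarrow> bool" where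
  "compact_op H T \<longleftrightarrow>
     (\<forall>x\<in>hs_carrier H. T x \<in> hs_carrier H) \<and>
     (\<forall>x\<in>hs_carrier H. \<forall>y\<in>hs_carrier H. T (hs_add H x y) = hs_add H (T x) (T y)) \<and>
     (\<forall>c. \<forall>x\<in>hs_carrier H. T (hs_scale H c x) = hs_scale H c (T x)) \<and>
     (\<forall>(f :: nat \<Rightarrow> 'h) M. (\<forall>k. f k \<in> hs_carrier H \<and> hs_norm H (f k) \<le> M) \<longrightarrow>
        (\<exists>g y. strict_mono g \<and> y \<in> hs_carrier H \<and> hs_lim H (\<lambda>k. T (f (g k))) y))"

text \<open>I/J is *-isomorphic to K(H): there is a surjective *-homomorphism
  phi : I \<rightarrow> K(H) with kernel exactly J (operators compared on the carrier of H).\<close>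
definition quotient_iso_compacts ::
  "'a cstar_data \<Rightarrow> 'a set \<Rightarrow> 'a set \<Rightarrow> 'h hilbert_data \<Rightarrow> ('a \<Rightarrow> 'h \<Rightarrow> 'h) \<Rightarrow> bool" where
  "quotient_iso_compacts A I J H \<phi> \<longleftrightarrow>
     (\<forall>a\<in>I. compact_op H (\<phi> a)) \<and>
     (\<forall>a\<in>I. \<forall>b\<in>I. \<forall>x\<in>hs_carrier H. \<phi> (cs_add A a b) x = hs_add H (\<phi> a x) (\<phi> b x)) \<and>
     (\<forall>c. \<forall>a\<in>I. \<forall>x\<in>hs_carrier H. \<phi> (cs_scale A c a) x = hs_scale H c (\<phi> a x)) \<and>
     (\<forall>a\<in>I. \<forall>b\<in>I. \<forall>x\<in>hs_carrier H. \<phi> (cs_mult A a b) x = \<phi> a (\<phi> b x)) \<and>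
     (\<forall>a\<in>I. \<forall>x\<in>hs_carrier H. \<forall>y\<in>hs_carrier H.
        hs_inner H (\<phi> a x) y = hs_inner H x (\<phi> (cs_star A a) y)) \<and>
     (\<forall>T. compact_op H T \<longrightarrow> (\<exists>a\<in>I. \<forall>x\<in>hs_carrier H. \<phi> a x = T x)) \<and>
     (\<forall>a\<in>I. a \<in> J \<longleftrightarrow> (\<forall>x\<in>hs_carrier H. \<phi> a x = hs_zero H))"

text \<open>Nowhere scattered, with Hilbert spaces ranging over the type 'h; the theorem
  leaves 'h free, hence quantifies over Hilbert spaces of every type.\<close>
definition nowhere_scattered :: "'h itself \<Rightarrow> 'a cstar_data \<Rightarrow> bool" where
  "nowhere_scattered (_ :: 'h itself) A \<longleftrightarrow>
     (\<forall>I J. closed_ideal A I \<and> closed_ideal A J \<and> J \<subseteq> I \<and> I \<noteq> J \<longrightarrow>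
        \<not> (\<exists>(H :: 'h hilbert_data) \<phi>. hilbert_space H \<and> quotient_iso_compacts A I J H \<phi>))"

end

theory Submission
  imports Defs "HOL-Computational_Algebra.Fundamental_Theorem_Algebra"
begin

locale cs =
  fixes A :: "'a cstar_data"
  assumes csa: "cstar_algebra A"
begin

abbreviation "X \<equiv> cs_carrier A"
abbreviation "zr \<equiv> cs_zero A"
abbreviation "ad \<equiv> cs_add A"
abbreviation "sc \<equiv> cs_scale A"
abbreviation "mu \<equiv> cs_mult A"
abbreviation "st \<equiv> cs_star A"
abbreviation "nm \<equiv> cs_norm A"
abbreviation "sb \<equiv> cs_sub A"

lemmas ax = csa[unfolded cstar_algebra_def Let_def]
lemmas ax0 = ax[THEN conjunct1]
lemmas ax1 = ax[THEN conjunct2, THEN conjunct1]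
lemmas ax2 = ax[THEN conjunct2, THEN conjunct2, THEN conjunct1]
lemmas ax3 = ax[THEN conjunct2, THEN conjunct2, THEN conjunct2, THEN conjunct1]
lemmas ax4 = ax[THEN conjunct2, THEN conjunct2, THEN conjunct2, THEN conjunct2, THEN conjunct1]
lemmas ax5 = ax[THEN conjunct2, THEN conjunct2, THEN conjunct2, THEN conjunct2, THEN conjunct2, THEN conjunct1]
lemmas ax6 = ax[THEN conjunct2, THEN conjunct2, THEN conjunct2, THEN conjunct2, THEN conjunct2, THEN conjunct2, THEN conjunct1]
lemmas ax7 = ax[THEN conjunct2, THEN conjunct2, THEN conjunct2, THEN conjunct2, THEN conjunct2, THEN conjunct2, THEN conjunct2, THEN conjunct1]
lemmas ax8 = ax[THEN conjunct2, THEN conjunct2, THEN conjunct2, THEN conjunct2, THEN conjunct2, THEN conjunct2, THEN conjunct2, THEN conjunct2, THEN conjunct1]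
lemmas ax9 = ax[THEN conjunct2, THEN conjunct2, THEN conjunct2, THEN conjunct2, THEN conjunct2, THEN conjunct2, THEN conjunct2, THEN conjunct2, THEN conjunct2, THEN conjunct1]
lemmas ax10 = ax[THEN conjunct2, THEN conjunct2, THEN conjunct2, THEN conjunct2, THEN conjunct2, THEN conjunct2, THEN conjunct2, THEN conjunct2, THEN conjunct2, THEN conjunct2, THEN conjunct1]
lemmas ax11 = ax[THEN conjunct2, THEN conjunct2, THEN conjunct2, THEN conjunct2, THEN conjunct2, THEN conjunct2, THEN conjunct2, THEN conjunct2, THEN conjunct2, THEN conjunct2, THEN conjunct2, THEN conjunct1]
lemmas ax12 = ax[THEN conjunct2, THEN conjunct2, THEN conjunct2, THEN conjunct2, THEN conjunct2, THEN conjunct2, THEN conjunct2, THEN conjunct2, THEN conjunct2, THEN conjunct2, THEN conjunct2, THEN conjunct2, THEN conjunct1]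
lemmas ax13 = ax[THEN conjunct2, THEN conjunct2, THEN conjunct2, THEN conjunct2, THEN conjunct2, THEN conjunct2, THEN conjunct2, THEN conjunct2, THEN conjunct2, THEN conjunct2, THEN conjunct2, THEN conjunct2, THEN conjunct2, THEN conjunct1]
lemmas ax14 = ax[THEN conjunct2, THEN conjunct2, THEN conjunct2, THEN conjunct2, THEN conjunct2, THEN conjunct2, THEN conjunct2, THEN conjunct2, THEN conjunct2, THEN conjunct2, THEN conjunct2, THEN conjunct2, THEN conjunct2, THEN conjunct2, THEN conjunct1]
lemmas ax15 = ax[THEN conjunct2, THEN conjunct2, THEN conjunct2, THEN conjunct2, THEN conjunct2, THEN conjunct2, THEN conjunct2, THEN conjunct2, THEN conjunct2, THEN conjunct2, THEN conjunct2, THEN conjunct2, THEN conjunct2, THEN conjunct2, THEN conjunct2, THEN conjunct1]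
lemmas ax16 = ax[THEN conjunct2, THEN conjunct2, THEN conjunct2, THEN conjunct2, THEN conjunct2, THEN conjunct2, THEN conjunct2, THEN conjunct2, THEN conjunct2, THEN conjunct2, THEN conjunct2, THEN conjunct2, THEN conjunct2, THEN conjunct2, THEN conjunct2, THEN conjunct2, THEN conjunct1]
lemmas ax17 = ax[THEN conjunct2, THEN conjunct2, THEN conjunct2, THEN conjunct2, THEN conjunct2, THEN conjunct2, THEN conjunct2, THEN conjunct2, THEN conjunct2, THEN conjunct2, THEN conjunct2, THEN conjunct2, THEN conjunct2, THEN conjunct2, THEN conjunct2, THEN conjunct2, THEN conjunct2, THEN conjunct1]
lemmas ax18 = ax[THEN conjunct2, THEN conjunct2, THEN conjunct2, THEN conjunct2, THEN conjunct2, THEN conjunct2, THEN conjunct2, THEN conjunct2, THEN conjunct2, THEN conjunct2, THEN conjunct2, THEN conjunct2, THEN conjunct2, THEN conjunct2, THEN conjunct2, THEN conjunct2, THEN conjunct2, THEN conjunct2, THEN conjunct1]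
lemmas ax19 = ax[THEN conjunct2, THEN conjunct2, THEN conjunct2, THEN conjunct2, THEN conjunct2, THEN conjunct2, THEN conjunct2, THEN conjunct2, THEN conjunct2, THEN conjunct2, THEN conjunct2, THEN conjunct2, THEN conjunct2, THEN conjunct2, THEN conjunct2, THEN conjunct2, THEN conjunct2, THEN conjunct2, THEN conjunct2, THEN conjunct1]
lemmas ax20 = ax[THEN conjunct2, THEN conjunct2, THEN conjunct2, THEN conjunct2, THEN conjunct2, THEN conjunct2, THEN conjunct2, THEN conjunct2, THEN conjunct2, THEN conjunct2, THEN conjunct2, THEN conjunct2, THEN conjunct2, THEN conjunct2, THEN conjunct2, THEN conjunct2, THEN conjunct2, THEN conjunct2, THEN conjunct2, THEN conjunct2, THEN conjunct1]
lemmas ax21 = ax[THEN conjunct2, THEN conjunct2, THEN conjunct2, THEN conjunct2, THEN conjunct2, THEN conjunct2, THEN conjunct2, THEN conjunct2, THEN conjunct2, THEN conjunct2, THEN conjunct2, THEN conjunct2, THEN conjunct2, THEN conjunct2, THEN conjunct2, THEN conjunct2, THEN conjunct2, THEN conjunct2, THEN conjunct2, THEN conjunct2, THEN conjunct2, THEN conjunct1]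
lemmas ax22 = ax[THEN conjunct2, THEN conjunct2, THEN conjunct2, THEN conjunct2, THEN conjunct2, THEN conjunct2, THEN conjunct2, THEN conjunct2, THEN conjunct2, THEN conjunct2, THEN conjunct2, THEN conjunct2, THEN conjunct2, THEN conjunct2, THEN conjunct2, THEN conjunct2, THEN conjunct2, THEN conjunct2, THEN conjunct2, THEN conjunct2, THEN conjunct2, THEN conjunct2, THEN conjunct1]
lemmas ax23 = ax[THEN conjunct2, THEN conjunct2, THEN conjunct2, THEN conjunct2, THEN conjunct2, THEN conjunct2, THEN conjunct2, THEN conjunct2, THEN conjunct2, THEN conjunct2, THEN conjunct2, THEN conjunct2, THEN conjunct2, THEN conjunct2, THEN conjunct2, THEN conjunct2, THEN conjunct2, THEN conjunct2, THEN conjunct2, THEN conjunct2, THEN conjunct2, THEN conjunct2, THEN conjunct2, THEN conjunct1]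
lemmas ax24 = ax[THEN conjunct2, THEN conjunct2, THEN conjunct2, THEN conjunct2, THEN conjunct2, THEN conjunct2, THEN conjunct2, THEN conjunct2, THEN conjunct2, THEN conjunct2, THEN conjunct2, THEN conjunct2, THEN conjunct2, THEN conjunct2, THEN conjunct2, THEN conjunct2, THEN conjunct2, THEN conjunct2, THEN conjunct2, THEN conjunct2, THEN conjunct2, THEN conjunct2, THEN conjunct2, THEN conjunct2, THEN conjunct1]
lemmas ax25 = ax[THEN conjunct2, THEN conjunct2, THEN conjunct2, THEN conjunct2, THEN conjunct2, THEN conjunct2, THEN conjunct2, THEN conjunct2, THEN conjunct2, THEN conjunct2, THEN conjunct2, THEN conjunct2, THEN conjunct2, THEN conjunct2, THEN conjunct2, THEN conjunct2, THEN conjunct2, THEN conjunct2, THEN conjunct2, THEN conjunct2, THEN conjunct2, THEN conjunct2, THEN conjunct2, THEN conjunct2, THEN conjunct2]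

lemma zero_in[simp]: "zr \<in> X" using ax0 by blast
lemma add_in[simp]: "a \<in> X \<Longrightarrow> b \<in> X \<Longrightarrow> ad a b \<in> X" using ax1 by blast
lemma mult_in[simp]: "a \<in> X \<Longrightarrow> b \<in> X \<Longrightarrow> mu a b \<in> X" using ax1 by blast
lemma scale_in[simp]: "a \<in> X \<Longrightarrow> sc c a \<in> X" using ax2 by blast
lemma star_in[simp]: "a \<in> X \<Longrightarrow> st a \<in> X" using ax3 by blast
lemma sub_def': "sb a b = ad a (sc (-1) b)" by (simp add: cs_sub_def)
lemma sub_in[simp]: "a \<in> X \<Longrightarrow> b \<in> X \<Longrightarrow> sb a b \<in> X" by (simp add: sub_def')

lemma add_assoc: "a \<in> X \<Longrightarrow> b \<in> X \<Longrightarrow> c \<in> X \<Longrightarrow> ad (ad a b) c = ad a (ad b c)" using ax4 by blast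
lemma add_comm: "a \<in> X \<Longrightarrow> b \<in> X \<Longrightarrow> ad a b = ad b a" using ax5 by blast
lemma add_zero_l[simp]: "a \<in> X \<Longrightarrow> ad zr a = a" using ax6 by blast
lemma add_neg: "a \<in> X \<Longrightarrow> ad a (sc (-1) a) = zr" using ax7 by blast
lemma scale_add_r: "a \<in> X \<Longrightarrow> b \<in> X \<Longrightarrow> sc c (ad a b) = ad (sc c a) (sc c b)" using ax8 by blast
lemma scale_add_l: "a \<in> X \<Longrightarrow> sc (c + d) a = ad (sc c a) (sc d a)" using ax9 by blast
lemma scale_scale: "a \<in> X \<Longrightarrow> sc c (sc d a) = sc (c * d) a" using ax10 by simp
lemma scale_one[simp]: "a \<in> X \<Longrightarrow> sc 1 a = a" using ax11 by blast
lemma mult_assoc: "a \<in> X \<Longrightarrow> b \<in> X \<Longrightarrow> c \<in> X \<Longrightarrow> mu (mu a b) c = mu a (mu b c)" using ax12 by blast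
lemma distr_l: "a \<in> X \<Longrightarrow> b \<in> X \<Longrightarrow> c \<in> X \<Longrightarrow> mu a (ad b c) = ad (mu a b) (mu a c)" using ax13 by blast
lemma distr_r: "a \<in> X \<Longrightarrow> b \<in> X \<Longrightarrow> c \<in> X \<Longrightarrow> mu (ad a b) c = ad (mu a c) (mu b c)" using ax14 by blast
lemma scale_mult_l: "a \<in> X \<Longrightarrow> b \<in> X \<Longrightarrow> mu (sc c a) b = sc c (mu a b)" using ax15 by metis
lemma scale_mult_r: "a \<in> X \<Longrightarrow> b \<in> X \<Longrightarrow> mu a (sc c b) = sc c (mu a b)" using ax15 by metis
lemma star_star[simp]: "a \<in> X \<Longrightarrow> st (st a) = a" using ax16 by blast
lemma star_add: "a \<in> X \<Longrightarrow> b \<in> X \<Longrightarrow> st (ad a b) = ad (st a) (st b)" using ax17 by blast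
lemma star_scale: "a \<in> X \<Longrightarrow> st (sc c a) = sc (cnj c) (st a)" using ax18 by blast
lemma star_mult: "a \<in> X \<Longrightarrow> b \<in> X \<Longrightarrow> st (mu a b) = mu (st b) (st a)" using ax19 by blast
lemma norm_nonneg[simp]: "a \<in> X \<Longrightarrow> nm a \<ge> 0" using ax20 by blast
lemma norm_zero_iff: "a \<in> X \<Longrightarrow> nm a = 0 \<longleftrightarrow> a = zr" using ax20 by blast
lemma norm_tri: "a \<in> X \<Longrightarrow> b \<in> X \<Longrightarrow> nm (ad a b) \<le> nm a + nm b" using ax21 by blast
lemma norm_scale: "a \<in> X \<Longrightarrow> nm (sc c a) = cmod c * nm a" using ax22 by blast
lemma norm_mult: "a \<in> X \<Longrightarrow> b \<in> X \<Longrightarrow> nm (mu a b) \<le> nm a * nm b" using ax23 by blast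
lemma cstar_id: "a \<in> X \<Longrightarrow> nm (mu (st a) a) = (nm a)\<^sup>2" using ax24 by blast
lemma complete: "(\<And>k. f k \<in> X) \<Longrightarrow> (\<And>e. e>0 \<Longrightarrow> \<exists>N. \<forall>i\<ge>N. \<forall>j\<ge>N. nm (sb (f i) (f j)) < e)
          \<Longrightarrow> \<exists>a\<in>X. cs_lim A f a" using ax25 by blast


lemma add_zero_r[simp]: "a \<in> X \<Longrightarrow> ad a zr = a" using add_comm[of a zr] by simp
lemma add_left_comm: "a \<in> X \<Longrightarrow> b \<in> X \<Longrightarrow> c \<in> X \<Longrightarrow> ad a (ad b c) = ad b (ad a c)"
  using add_assoc[of a b c] add_assoc[of b a c] add_comm[of a b] by simp
lemmas add_ac = add_assoc add_comm add_left_comm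

lemma scale_zero_l[simp]: "a \<in> X \<Longrightarrow> sc 0 a = zr"
proof -
  assume a: "a \<in> X"
  define z where "z = sc 0 a"
  have zX: "z \<in> X" using a by (simp add: z_def)
  have zz: "ad z z = z" using scale_add_l[OF a, of 0 0] by (simp add: z_def)
  have "zr = ad z (sc (-1) z)" using zX by (simp add: add_neg)
  also have "\<dots> = ad (ad z z) (sc (-1) z)" by (simp only: zz)
  also have "\<dots> = ad z (ad z (sc (-1) z))" using zX by (simp add: add_assoc)
  also have "\<dots> = z" using zX by (simp add: add_neg)
  finally show ?thesis by (simp add: z_def)
qed
lemma scale_zero_r[simp]: "sc c zr = zr"
  using scale_scale[of zr c 0] by simp
lemma collect1: "a \<in> X \<Longrightarrow> ad (sc c a) (sc d a) = sc (c + d) a" by (simp add: scale_add_l)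
lemma collect2: "a \<in> X \<Longrightarrow> b \<in> X \<Longrightarrow> ad (sc c a) (ad (sc d a) b) = ad (sc (c + d) a) b"
  by (simp add: scale_add_l add_assoc)
lemma collect3: "a \<in> X \<Longrightarrow> ad a (sc d a) = sc (1 + d) a" by (simp add: scale_add_l)
lemma collect4: "a \<in> X \<Longrightarrow> ad (sc d a) a = sc (d + 1) a" by (simp add: scale_add_l)
lemma collect5: "a \<in> X \<Longrightarrow> b \<in> X \<Longrightarrow> ad a (ad (sc d a) b) = ad (sc (1 + d) a) b"
  by (simp add: scale_add_l add_assoc)
lemma collect6: "a \<in> X \<Longrightarrow> b \<in> X \<Longrightarrow> ad (sc d a) (ad a b) = ad (sc (d + 1) a) b"
  by (simp add: scale_add_l add_assoc)
lemma collect7: "a \<in> X \<Longrightarrow> ad a a = sc 2 a" using scale_add_l[of a 1 1] by simp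
lemma collect8: "a \<in> X \<Longrightarrow> b \<in> X \<Longrightarrow> ad a (ad a b) = ad (sc 2 a) b"
  using scale_add_l[of a 1 1] by (simp add: add_assoc)
lemmas collect = collect1 collect2 collect3 collect4 collect5 collect6 collect7 collect8

lemma mult_zero_l[simp]: "a \<in> X \<Longrightarrow> mu zr a = zr"
  using scale_mult_l[of zr a 0] by simp
lemma mult_zero_r[simp]: "a \<in> X \<Longrightarrow> mu a zr = zr"
  using scale_mult_r[of a zr 0] by simp
lemma star_zero[simp]: "st zr = zr"
  using star_scale[of zr 0] by simp

lemma scale_distrib_simps:
  "a \<in> X \<Longrightarrow> b \<in> X \<Longrightarrow> sc c (ad a b) = ad (sc c a) (sc c b)"
  "a \<in> X \<Longrightarrow> sc c (sc d a) = sc (c * d) a"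
  "a \<in> X \<Longrightarrow> b \<in> X \<Longrightarrow> mu (sc c a) b = sc c (mu a b)"
  "a \<in> X \<Longrightarrow> b \<in> X \<Longrightarrow> mu a (sc c b) = sc c (mu a b)"
  by (simp_all add: scale_add_r scale_scale scale_mult_l scale_mult_r)

lemma mv1: "a \<in> X \<Longrightarrow> b1 \<in> X \<Longrightarrow> ad (a) (ad b1 (sc d a)) = ad b1 (sc (1 + d) a)"
  apply (subst add_left_comm[of "a" "b1" "sc d a"])
  apply ((simp; fail)+)?
  apply (simp_all add: collect)
  done
lemma mv2: "a \<in> X \<Longrightarrow> b1 \<in> X \<Longrightarrow> r \<in> X \<Longrightarrow> ad (a) (ad b1 (ad (sc d a) r)) = ad b1 (ad (sc (1 + d) a) r)"
  apply (subst add_left_comm[of "a" "b1" "ad (sc d a) r"])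
  apply ((simp; fail)+)?
  apply (simp_all add: collect)
  done
lemma mv3: "a \<in> X \<Longrightarrow> b1 \<in> X \<Longrightarrow> b2 \<in> X \<Longrightarrow> ad (a) (ad b1 (ad b2 (sc d a))) = ad b1 (ad b2 (sc (1 + d) a))"
  apply (subst add_left_comm[of "a" "b1" "ad b2 (sc d a)"])
  apply ((simp; fail)+)?
  apply (subst add_left_comm[of "a" "b2" "sc d a"])
  apply ((simp; fail)+)?
  apply (simp_all add: collect)
  done
lemma mv4: "a \<in> X \<Longrightarrow> b1 \<in> X \<Longrightarrow> b2 \<in> X \<Longrightarrow> r \<in> X \<Longrightarrow> ad (a) (ad b1 (ad b2 (ad (sc d a) r))) = ad b1 (ad b2 (ad (sc (1 + d) a) r))"
  apply (subst add_left_comm[of "a" "b1" "ad b2 (ad (sc d a) r)"])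
  apply ((simp; fail)+)?
  apply (subst add_left_comm[of "a" "b2" "ad (sc d a) r"])
  apply ((simp; fail)+)?
  apply (simp_all add: collect)
  done
lemma mv5: "a \<in> X \<Longrightarrow> b1 \<in> X \<Longrightarrow> b2 \<in> X \<Longrightarrow> b3 \<in> X \<Longrightarrow> ad (a) (ad b1 (ad b2 (ad b3 (sc d a)))) = ad b1 (ad b2 (ad b3 (sc (1 + d) a)))"
  apply (subst add_left_comm[of "a" "b1" "ad b2 (ad b3 (sc d a))"])
  apply ((simp; fail)+)?
  apply (subst add_left_comm[of "a" "b2" "ad b3 (sc d a)"])
  apply ((simp; fail)+)?
  apply (subst add_left_comm[of "a" "b3" "sc d a"])
  apply ((simp; fail)+)?
  apply (simp_all add: collect)
  done
lemma mv6: "a \<in> X \<Longrightarrow> b1 \<in> X \<Longrightarrow> b2 \<in> X \<Longrightarrow> b3 \<in> X \<Longrightarrow> r \<in> X \<Longrightarrow> ad (a) (ad b1 (ad b2 (ad b3 (ad (sc d a) r)))) = ad b1 (ad b2 (ad b3 (ad (sc (1 + d) a) r)))"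
  apply (subst add_left_comm[of "a" "b1" "ad b2 (ad b3 (ad (sc d a) r))"])
  apply ((simp; fail)+)?
  apply (subst add_left_comm[of "a" "b2" "ad b3 (ad (sc d a) r)"])
  apply ((simp; fail)+)?
  apply (subst add_left_comm[of "a" "b3" "ad (sc d a) r"])
  apply ((simp; fail)+)?
  apply (simp_all add: collect)
  done
lemma mv7: "a \<in> X \<Longrightarrow> b1 \<in> X \<Longrightarrow> ad (sc c a) (ad b1 (a)) = ad b1 (sc (c + 1) a)"
  apply (subst add_left_comm[of "sc c a" "b1" "a"])
  apply ((simp; fail)+)?
  apply (simp_all add: collect)
  done
lemma mv8: "a \<in> X \<Longrightarrow> b1 \<in> X \<Longrightarrow> r \<in> X \<Longrightarrow> ad (sc c a) (ad b1 (ad (a) r)) = ad b1 (ad (sc (c + 1) a) r)"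
  apply (subst add_left_comm[of "sc c a" "b1" "ad (a) r"])
  apply ((simp; fail)+)?
  apply (simp_all add: collect)
  done
lemma mv9: "a \<in> X \<Longrightarrow> b1 \<in> X \<Longrightarrow> b2 \<in> X \<Longrightarrow> ad (sc c a) (ad b1 (ad b2 (a))) = ad b1 (ad b2 (sc (c + 1) a))"
  apply (subst add_left_comm[of "sc c a" "b1" "ad b2 (a)"])
  apply ((simp; fail)+)?
  apply (subst add_left_comm[of "sc c a" "b2" "a"])
  apply ((simp; fail)+)?
  apply (simp_all add: collect)
  done
lemma mv10: "a \<in> X \<Longrightarrow> b1 \<in> X \<Longrightarrow> b2 \<in> X \<Longrightarrow> r \<in> X \<Longrightarrow> ad (sc c a) (ad b1 (ad b2 (ad (a) r))) = ad b1 (ad b2 (ad (sc (c + 1) a) r))"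
  apply (subst add_left_comm[of "sc c a" "b1" "ad b2 (ad (a) r)"])
  apply ((simp; fail)+)?
  apply (subst add_left_comm[of "sc c a" "b2" "ad (a) r"])
  apply ((simp; fail)+)?
  apply (simp_all add: collect)
  done
lemma mv11: "a \<in> X \<Longrightarrow> b1 \<in> X \<Longrightarrow> b2 \<in> X \<Longrightarrow> b3 \<in> X \<Longrightarrow> ad (sc c a) (ad b1 (ad b2 (ad b3 (a)))) = ad b1 (ad b2 (ad b3 (sc (c + 1) a)))"
  apply (subst add_left_comm[of "sc c a" "b1" "ad b2 (ad b3 (a))"])
  apply ((simp; fail)+)?
  apply (subst add_left_comm[of "sc c a" "b2" "ad b3 (a)"])
  apply ((simp; fail)+)?
  apply (subst add_left_comm[of "sc c a" "b3" "a"])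
  apply ((simp; fail)+)?
  apply (simp_all add: collect)
  done
lemma mv12: "a \<in> X \<Longrightarrow> b1 \<in> X \<Longrightarrow> b2 \<in> X \<Longrightarrow> b3 \<in> X \<Longrightarrow> r \<in> X \<Longrightarrow> ad (sc c a) (ad b1 (ad b2 (ad b3 (ad (a) r)))) = ad b1 (ad b2 (ad b3 (ad (sc (c + 1) a) r)))"
  apply (subst add_left_comm[of "sc c a" "b1" "ad b2 (ad b3 (ad (a) r))"])
  apply ((simp; fail)+)?
  apply (subst add_left_comm[of "sc c a" "b2" "ad b3 (ad (a) r)"])
  apply ((simp; fail)+)?
  apply (subst add_left_comm[of "sc c a" "b3" "ad (a) r"])
  apply ((simp; fail)+)?
  apply (simp_all add: collect)
  done
lemma mv13: "a \<in> X \<Longrightarrow> b1 \<in> X \<Longrightarrow> ad (sc c a) (ad b1 (sc d a)) = ad b1 (sc (c + d) a)"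
  apply (subst add_left_comm[of "sc c a" "b1" "sc d a"])
  apply ((simp; fail)+)?
  apply (simp_all add: collect)
  done
lemma mv14: "a \<in> X \<Longrightarrow> b1 \<in> X \<Longrightarrow> r \<in> X \<Longrightarrow> ad (sc c a) (ad b1 (ad (sc d a) r)) = ad b1 (ad (sc (c + d) a) r)"
  apply (subst add_left_comm[of "sc c a" "b1" "ad (sc d a) r"])
  apply ((simp; fail)+)?
  apply (simp_all add: collect)
  done
lemma mv15: "a \<in> X \<Longrightarrow> b1 \<in> X \<Longrightarrow> b2 \<in> X \<Longrightarrow> ad (sc c a) (ad b1 (ad b2 (sc d a))) = ad b1 (ad b2 (sc (c + d) a))"
  apply (subst add_left_comm[of "sc c a" "b1" "ad b2 (sc d a)"])
  apply ((simp; fail)+)?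
  apply (subst add_left_comm[of "sc c a" "b2" "sc d a"])
  apply ((simp; fail)+)?
  apply (simp_all add: collect)
  done
lemma mv16: "a \<in> X \<Longrightarrow> b1 \<in> X \<Longrightarrow> b2 \<in> X \<Longrightarrow> r \<in> X \<Longrightarrow> ad (sc c a) (ad b1 (ad b2 (ad (sc d a) r))) = ad b1 (ad b2 (ad (sc (c + d) a) r))"
  apply (subst add_left_comm[of "sc c a" "b1" "ad b2 (ad (sc d a) r)"])
  apply ((simp; fail)+)?
  apply (subst add_left_comm[of "sc c a" "b2" "ad (sc d a) r"])
  apply ((simp; fail)+)?
  apply (simp_all add: collect)
  done
lemma mv17: "a \<in> X \<Longrightarrow> b1 \<in> X \<Longrightarrow> b2 \<in> X \<Longrightarrow> b3 \<in> X \<Longrightarrow> ad (sc c a) (ad b1 (ad b2 (ad b3 (sc d a)))) = ad b1 (ad b2 (ad b3 (sc (c + d) a)))"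
  apply (subst add_left_comm[of "sc c a" "b1" "ad b2 (ad b3 (sc d a))"])
  apply ((simp; fail)+)?
  apply (subst add_left_comm[of "sc c a" "b2" "ad b3 (sc d a)"])
  apply ((simp; fail)+)?
  apply (subst add_left_comm[of "sc c a" "b3" "sc d a"])
  apply ((simp; fail)+)?
  apply (simp_all add: collect)
  done
lemma mv18: "a \<in> X \<Longrightarrow> b1 \<in> X \<Longrightarrow> b2 \<in> X \<Longrightarrow> b3 \<in> X \<Longrightarrow> r \<in> X \<Longrightarrow> ad (sc c a) (ad b1 (ad b2 (ad b3 (ad (sc d a) r)))) = ad b1 (ad b2 (ad b3 (ad (sc (c + d) a) r)))"
  apply (subst add_left_comm[of "sc c a" "b1" "ad b2 (ad b3 (ad (sc d a) r))"])
  apply ((simp; fail)+)?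
  apply (subst add_left_comm[of "sc c a" "b2" "ad b3 (ad (sc d a) r)"])
  apply ((simp; fail)+)?
  apply (subst add_left_comm[of "sc c a" "b3" "ad (sc d a) r"])
  apply ((simp; fail)+)?
  apply (simp_all add: collect)
  done
lemma mv19: "a \<in> X \<Longrightarrow> b1 \<in> X \<Longrightarrow> ad (a) (ad b1 (a)) = ad b1 (sc 2 a)"
  apply (subst add_left_comm[of "a" "b1" "a"])
  apply ((simp; fail)+)?
  apply (simp_all add: collect)
  done
lemma mv20: "a \<in> X \<Longrightarrow> b1 \<in> X \<Longrightarrow> r \<in> X \<Longrightarrow> ad (a) (ad b1 (ad (a) r)) = ad b1 (ad (sc 2 a) r)"
  apply (subst add_left_comm[of "a" "b1" "ad (a) r"])
  apply ((simp; fail)+)?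
  apply (simp_all add: collect)
  done
lemma mv21: "a \<in> X \<Longrightarrow> b1 \<in> X \<Longrightarrow> b2 \<in> X \<Longrightarrow> ad (a) (ad b1 (ad b2 (a))) = ad b1 (ad b2 (sc 2 a))"
  apply (subst add_left_comm[of "a" "b1" "ad b2 (a)"])
  apply ((simp; fail)+)?
  apply (subst add_left_comm[of "a" "b2" "a"])
  apply ((simp; fail)+)?
  apply (simp_all add: collect)
  done
lemma mv22: "a \<in> X \<Longrightarrow> b1 \<in> X \<Longrightarrow> b2 \<in> X \<Longrightarrow> r \<in> X \<Longrightarrow> ad (a) (ad b1 (ad b2 (ad (a) r))) = ad b1 (ad b2 (ad (sc 2 a) r))"
  apply (subst add_left_comm[of "a" "b1" "ad b2 (ad (a) r)"])
  apply ((simp; fail)+)?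
  apply (subst add_left_comm[of "a" "b2" "ad (a) r"])
  apply ((simp; fail)+)?
  apply (simp_all add: collect)
  done
lemma mv23: "a \<in> X \<Longrightarrow> b1 \<in> X \<Longrightarrow> b2 \<in> X \<Longrightarrow> b3 \<in> X \<Longrightarrow> ad (a) (ad b1 (ad b2 (ad b3 (a)))) = ad b1 (ad b2 (ad b3 (sc 2 a)))"
  apply (subst add_left_comm[of "a" "b1" "ad b2 (ad b3 (a))"])
  apply ((simp; fail)+)?
  apply (subst add_left_comm[of "a" "b2" "ad b3 (a)"])
  apply ((simp; fail)+)?
  apply (subst add_left_comm[of "a" "b3" "a"])
  apply ((simp; fail)+)?
  apply (simp_all add: collect)
  done
lemma mv24: "a \<in> X \<Longrightarrow> b1 \<in> X \<Longrightarrow> b2 \<in> X \<Longrightarrow> b3 \<in> X \<Longrightarrow> r \<in> X \<Longrightarrow> ad (a) (ad b1 (ad b2 (ad b3 (ad (a) r)))) = ad b1 (ad b2 (ad b3 (ad (sc 2 a) r)))"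
  apply (subst add_left_comm[of "a" "b1" "ad b2 (ad b3 (ad (a) r))"])
  apply ((simp; fail)+)?
  apply (subst add_left_comm[of "a" "b2" "ad b3 (ad (a) r)"])
  apply ((simp; fail)+)?
  apply (subst add_left_comm[of "a" "b3" "ad (a) r"])
  apply ((simp; fail)+)?
  apply (simp_all add: collect)
  done
lemmas mvs = mv1 mv2 mv3 mv4 mv5 mv6 mv7 mv8 mv9 mv10 mv11 mv12 mv13 mv14 mv15 mv16 mv17 mv18 mv19 mv20 mv21 mv22 mv23 mv24

lemmas norm_simps = scale_distrib_simps distr_l distr_r mult_assoc star_add star_scale star_mult
   sub_def' add_ac collect mvs

lemma neg_neg: "a \<in> X \<Longrightarrow> sc (-1) (sc (-1) a) = a" by (simp add: scale_scale)

lemma sub_self[simp]: "a \<in> X \<Longrightarrow> sb a a = zr" by (simp add: sub_def' add_neg)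
lemma sub_zero_r[simp]: "a \<in> X \<Longrightarrow> sb a zr = a" by (simp add: sub_def')

lemma add_neg2: "a \<in> X \<Longrightarrow> b \<in> X \<Longrightarrow> ad a (ad (sc (-1) a) b) = b"
  by (simp add: add_assoc[symmetric] add_neg)

lemma sub_eq_zero: assumes "a \<in> X" "b \<in> X" "sb a b = zr" shows "a = b"
proof -
  have "a = ad (sb a b) b" using assms(1,2) by (simp add: norm_simps)
  with assms show ?thesis by simp
qed

lemma norm_neg: "a \<in> X \<Longrightarrow> nm (sc (-1) a) = nm a" by (simp add: norm_scale)

lemma norm_sub_sym: "a \<in> X \<Longrightarrow> b \<in> X \<Longrightarrow> nm (sb a b) = nm (sb b a)"
proof -
  assume ab: "a \<in> X" "b \<in> X"
  have "sb b a = sc (-1) (sb a b)" using ab by (simp add: norm_simps)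
  thus ?thesis using ab by (simp add: norm_neg)
qed

lemma norm_sub_tri: "a \<in> X \<Longrightarrow> b \<in> X \<Longrightarrow> c \<in> X \<Longrightarrow> nm (sb a c) \<le> nm (sb a b) + nm (sb b c)"
proof -
  assume abc: "a \<in> X" "b \<in> X" "c \<in> X"
  have "sb a c = ad (sb a b) (sb b c)" using abc by (simp add: norm_simps add_neg2)
  thus ?thesis using abc norm_tri[of "sb a b" "sb b c"] by simp
qed

lemma norm_sub_le: "a \<in> X \<Longrightarrow> b \<in> X \<Longrightarrow> nm (sb a b) \<le> nm a + nm b"
  using norm_tri[of a "sc (-1) b"] by (simp add: sub_def' norm_neg)

lemma norm_eq_zeroI: "a \<in> X \<Longrightarrow> nm a \<le> 0 \<Longrightarrow> a = zr"
  using norm_nonneg[of a] norm_zero_iff[of a] by linarith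

lemma eq_by_norm: "a \<in> X \<Longrightarrow> b \<in> X \<Longrightarrow> nm (sb a b) \<le> 0 \<Longrightarrow> a = b"
proof -
  assume ab: "a \<in> X" "b \<in> X" "nm (sb a b) \<le> 0"
  hence "sb a b = zr" by (intro norm_eq_zeroI) simp_all
  thus ?thesis using ab sub_eq_zero by blast
qed

lemma norm_star: assumes a: "a \<in> X" shows "nm (st a) = nm a"
proof -
  have le: "nm b \<le> nm (st b)" if b: "b \<in> X" for b
  proof (cases "nm b = 0")
    case True thus ?thesis using b norm_nonneg[of "st b"] by simp
  next
    case False
    have "(nm b)\<^sup>2 \<le> nm (st b) * nm b" using cstar_id[OF b] norm_mult[of "st b" b] b by simp
    hence "nm b * nm b \<le> nm (st b) * nm b" by (simp add: power2_eq_square)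
    thus ?thesis using False norm_nonneg[OF b] by (simp add: mult_le_cancel_right)
  qed
  show ?thesis using le[OF a] le[of "st a"] a by simp
qed

lemma norm_mult_star: "a \<in> X \<Longrightarrow> nm (mu a (st a)) = (nm a)\<^sup>2"
  using cstar_id[of "st a"] norm_star[of a] by simp

lemma star_sub: "a \<in> X \<Longrightarrow> b \<in> X \<Longrightarrow> st (sb a b) = sb (st a) (st b)"
  by (simp add: sub_def' star_add star_scale)

lemma norm_sub_star: "a \<in> X \<Longrightarrow> b \<in> X \<Longrightarrow> nm (sb (st a) (st b)) = nm (sb a b)"
  using norm_star[of "sb a b"] star_sub[of a b] by simp

lemma lim_def': "cs_lim A f a \<longleftrightarrow> (\<lambda>k. nm (sb (f k) a)) \<longlonglongrightarrow> 0" by (simp add: cs_lim_def)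

lemma le_zero_by_lim: fixes g :: "nat \<Rightarrow> real"
  assumes "g \<longlonglongrightarrow> 0" "\<And>k. c \<le> g k" shows "c \<le> 0"
  using LIMSEQ_le_const[OF assms(1), of c] assms(2) by blast

lemma lim_unique: assumes "\<And>k. f k \<in> X" "a \<in> X" "b \<in> X" "cs_lim A f a" "cs_lim A f b"
  shows "a = b"
proof (rule eq_by_norm[OF assms(2,3)])
  have "(\<lambda>k. nm (sb (f k) a) + nm (sb (f k) b)) \<longlonglongrightarrow> 0"
    using assms(4,5) unfolding lim_def' using tendsto_add by fastforce
  moreover have "nm (sb a b) \<le> nm (sb (f k) a) + nm (sb (f k) b)" for k
    using norm_sub_tri[of a "f k" b] norm_sub_sym[of a "f k"] assms by simp
  ultimately show "nm (sb a b) \<le> 0" by (rule le_zero_by_lim)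
qed

lemma lim_by_bound: fixes g :: "nat \<Rightarrow> real"
  assumes "g \<longlonglongrightarrow> 0" "\<And>k. nm (sb (f k) a) \<le> g k" "\<And>k. f k \<in> X" "a \<in> X"
  shows "cs_lim A f a"
  unfolding lim_def'
proof (rule tendsto_sandwich[of "\<lambda>_. 0" _ _ g])
  show "\<forall>\<^sub>F n in sequentially. 0 \<le> nm (sb (f n) a)" using assms by simp
  show "\<forall>\<^sub>F n in sequentially. nm (sb (f n) a) \<le> g n" using assms by simp
qed (use assms in auto)

end


context cs begin

lemma norm_zero[simp]: "nm zr = 0" using norm_zero_iff[of zr] by simp

lemma mult_sub_l: "a \<in> X \<Longrightarrow> b \<in> X \<Longrightarrow> c \<in> X \<Longrightarrow> mu a (sb b c) = sb (mu a b) (mu a c)"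
  by (simp add: norm_simps)
lemma mult_sub_r: "a \<in> X \<Longrightarrow> b \<in> X \<Longrightarrow> c \<in> X \<Longrightarrow> mu (sb a b) c = sb (mu a c) (mu b c)"
  by (simp add: norm_simps)
lemma comm_ext: "a \<in> X \<Longrightarrow> b \<in> X \<Longrightarrow> x \<in> X \<Longrightarrow> mu a b = mu b a \<Longrightarrow> mu a (mu b x) = mu b (mu a x)"
  by (metis mult_assoc)

definition Fq :: "'a \<Rightarrow> 'a \<Rightarrow> 'a" where "Fq q s = sc (-1/2) (ad q (mu s s))"

lemma Fq_in[simp]: "q \<in> X \<Longrightarrow> s \<in> X \<Longrightarrow> Fq q s \<in> X" by (simp add: Fq_def)

lemma Fq_norm: assumes "q \<in> X" "s \<in> X" "nm q \<le> 4/9" "nm s \<le> 1/2" shows "nm (Fq q s) \<le> 1/2"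
proof -
  have "nm (mu s s) \<le> nm s * nm s" using assms norm_mult by simp
  also have "\<dots> \<le> 1/2 * (1/2)" using assms norm_nonneg[of s] by (intro mult_mono) auto
  finally have "nm (ad q (mu s s)) \<le> 4/9 + 1/4" using norm_tri[of q "mu s s"] assms by simp
  thus ?thesis using assms by (simp add: Fq_def norm_scale)
qed

lemma Fq_contr: assumes X: "q \<in> X" "s \<in> X" "s' \<in> X" and n: "nm s \<le> 1/2" "nm s' \<le> 1/2"
  shows "nm (sb (Fq q s) (Fq q s')) \<le> 1/2 * nm (sb s s')"
proof -
  have id: "sb (Fq q s) (Fq q s') = sc (-1/2) (ad (mu s (sb s s')) (mu (sb s s') s'))"
    using X by (simp add: Fq_def norm_simps)
  have "nm (ad (mu s (sb s s')) (mu (sb s s') s')) \<le> nm s * nm (sb s s') + nm (sb s s') * nm s'"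
    using X norm_tri[of "mu s (sb s s')" "mu (sb s s') s'"] norm_mult[of s "sb s s'"] norm_mult[of "sb s s'" s']
    by simp
  also have "\<dots> \<le> 1/2 * nm (sb s s') + nm (sb s s') * (1/2)"
    using n X norm_nonneg[of "sb s s'"] by (intro add_mono mult_mono) auto
  finally show ?thesis using X by (simp add: id norm_scale)
qed

primrec Tq :: "'a \<Rightarrow> nat \<Rightarrow> 'a" where
  "Tq q 0 = zr" | "Tq q (Suc n) = Fq q (Tq q n)"

lemma sqrt_exists:
  assumes q: "q \<in> X" "st q = q" "nm q \<le> 4/9" and h: "h \<in> X" "mu h q = mu q h"
  shows "\<exists>t\<in>X. st t = t \<and> mu h t = mu t h \<and> nm t \<le> 1/2 \<and> Fq q t = t"
proof -
  let ?T = "Tq q"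
  have TX: "?T n \<in> X" for n using q by (induct n) auto
  have Tn: "nm (?T n) \<le> 1/2" for n
  proof (induct n)
    case (Suc n) thus ?case using Fq_norm[OF q(1) TX[of n] q(3) Suc] by simp
  qed simp
  have Tst: "st (?T n) = ?T n" for n
  proof (induct n)
    case (Suc n) thus ?case using q TX[of n] by (simp add: Fq_def norm_simps)
  qed simp
  have Tc: "mu h (?T n) = mu (?T n) h" for n
  proof (induct n)
    case (Suc n)
    have e: "mu h (mu (?T n) x) = mu (?T n) (mu h x)" if "x \<in> X" for x
      using comm_ext[OF h(1) TX[of n] that Suc] .
    have e2: "mu h (mu q x) = mu q (mu h x)" if "x \<in> X" for x
      using comm_ext[OF h(1) q(1) that h(2)] .
    show ?case using q h TX[of n] by (simp add: Fq_def norm_simps e e2 Suc)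
  qed (use h in simp)
  have cau: "nm (sb (?T (i + d)) (?T i)) \<le> (1/2)^(i+1)" for i d
  proof (induct i)
    case 0 thus ?case using Tn[of d] TX by simp
  next
    case (Suc i)
    have "nm (sb (?T (Suc i + d)) (?T (Suc i))) \<le> 1/2 * nm (sb (?T (i + d)) (?T i))"
      using Fq_contr[OF q(1) TX[of "i+d"] TX[of i] Tn Tn] by simp
    also have "\<dots> \<le> 1/2 * (1/2)^(i+1)" using Suc by simp
    finally show ?case by simp
  qed
  have "\<exists>t\<in>X. cs_lim A ?T t"
  proof (rule complete)
    fix e :: real assume e: "e > 0"
    obtain N where N: "(1/2::real)^N < e" using real_arch_pow_inv[OF e, of "1/2"] by auto
    show "\<exists>N. \<forall>i\<ge>N. \<forall>j\<ge>N. nm (sb (?T i) (?T j)) < e"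
    proof (intro exI allI impI)
      fix i j assume ij: "N \<le> i" "N \<le> j"
      have mono: "(1/2::real)^(k+1) < e" if "N \<le> k" for k
      proof -
        have "(1/2::real)^(k+1) \<le> (1/2)^N" using that by (intro power_decreasing) auto
        thus ?thesis using N by linarith
      qed
      show "nm (sb (?T i) (?T j)) < e"
      proof (cases "i \<le> j")
        case True
        then obtain d where "j = i + d" using le_Suc_ex by blast
        hence "nm (sb (?T j) (?T i)) < e" using cau[of i d] mono[OF ij(1)] by simp
        thus ?thesis using norm_sub_sym TX by metis
      next
        case False
        then obtain d where "i = j + d" using le_Suc_ex[of j i] by auto
        thus ?thesis using cau[of j d] mono[OF ij(2)] by simp
      qed
    qed
  qed (use TX in auto)
  then obtain t where tX: "t \<in> X" and lim: "cs_lim A ?T t" by blast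
  define d where "d = (\<lambda>k. nm (sb (?T k) t))"
  have d0: "d \<longlonglongrightarrow> 0" using lim by (simp add: lim_def' d_def)
  have dn: "d k \<ge> 0" for k using TX tX by (simp add: d_def)
  have tn: "nm t \<le> 1/2"
  proof -
    have "nm t - 1/2 \<le> 0"
    proof (rule le_zero_by_lim[OF d0])
      fix k
      have "nm (sb t zr) \<le> nm (sb t (?T k)) + nm (sb (?T k) zr)" using norm_sub_tri[of t "?T k" zr] TX tX by simp
      thus "nm t - 1/2 \<le> d k" using Tn[of k] TX tX norm_sub_sym[of t "?T k"] by (simp add: d_def)
    qed
    thus ?thesis by simp
  qed
  have d02: "(\<lambda>k. 2 * d k) \<longlonglongrightarrow> 0" using tendsto_mult_right_zero[OF d0] by simp
  have tst: "st t = t"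
  proof (rule eq_by_norm)
    show "nm (sb (st t) t) \<le> 0"
    proof (rule le_zero_by_lim[OF d02])
      fix k
      have "nm (sb (st t) t) \<le> nm (sb (st t) (st (?T k))) + nm (sb (?T k) t)"
        using norm_sub_tri[of "st t" "?T k" t] TX tX Tst[of k] by simp
      thus "nm (sb (st t) t) \<le> 2 * d k" using TX tX norm_sub_star norm_sub_sym[of t "?T k"]
        by (simp add: d_def)
    qed
  qed (use tX in auto)
  have dh: "(\<lambda>k. 2 * nm h * d k) \<longlonglongrightarrow> 0" using tendsto_mult_right_zero[OF d0] by simp
  have tc: "mu h t = mu t h"
  proof (rule eq_by_norm)
    show "nm (sb (mu h t) (mu t h)) \<le> 0"
    proof (rule le_zero_by_lim[OF dh])
      fix k
      have "nm (sb (mu h t) (mu t h)) \<le> nm (sb (mu h t) (mu h (?T k))) + nm (sb (mu (?T k) h) (mu t h))"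
        using norm_sub_tri[of "mu h t" "mu h (?T k)" "mu t h"] TX tX h Tc[of k] by simp
      also have "\<dots> = nm (mu h (sb t (?T k))) + nm (mu (sb (?T k) t) h)"
        using TX tX h by (simp add: mult_sub_l mult_sub_r)
      also have "\<dots> \<le> nm h * d k + d k * nm h"
        using norm_mult[of h "sb t (?T k)"] norm_mult[of "sb (?T k) t" h] TX tX h norm_sub_sym[of t "?T k"]
        by (intro add_mono) (simp_all add: d_def)
      finally show "nm (sb (mu h t) (mu t h)) \<le> 2 * nm h * d k" by (simp add: algebra_simps)
    qed
  qed (use tX h in auto)
  have d1: "(\<lambda>k. 1/2 * d k + d (Suc k)) \<longlonglongrightarrow> 0"
    using tendsto_add[OF tendsto_mult_right_zero[OF d0, of "1/2"] LIMSEQ_Suc[OF d0]] by simp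
  have fxp: "Fq q t = t"
  proof (rule eq_by_norm)
    show "nm (sb (Fq q t) t) \<le> 0"
    proof (rule le_zero_by_lim[OF d1])
      fix k
      have "nm (sb (Fq q t) t) \<le> nm (sb (Fq q t) (Fq q (?T k))) + nm (sb (?T (Suc k)) t)"
        using norm_sub_tri[of "Fq q t" "Fq q (?T k)" t] TX tX q by simp
      also have "\<dots> \<le> 1/2 * nm (sb t (?T k)) + d (Suc k)"
        using Fq_contr[OF q(1) tX TX[of k] tn Tn[of k]] by (simp add: d_def)
      finally show "nm (sb (Fq q t) t) \<le> 1/2 * d k + d (Suc k)"
        using norm_sub_sym[of t "?T k"] TX tX by (simp add: d_def)
    qed
  qed (use tX q in auto)
  show ?thesis using tX tst tc tn fxp by blast
qed


lemma L1: assumes "u \<in> X" "v \<in> X" "mu (st u) v = mu (st v) u"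
  shows "mu (st (ad u (sc \<i> v))) (ad u (sc \<i> v)) = ad (mu (st u) u) (mu (st v) v)"
    and "mu (st (ad u (sc (-\<i>) v))) (ad u (sc (-\<i>) v)) = ad (mu (st u) u) (mu (st v) v)"
  using assms by (simp_all add: norm_simps)

lemma norm_eq_by_sq: "a \<in> X \<Longrightarrow> b \<in> X \<Longrightarrow> (nm a)\<^sup>2 = (nm b)\<^sup>2 \<Longrightarrow> nm a = nm b"
  using power2_eq_imp_eq norm_nonneg by metis

lemma cnj_real[simp]: "cnj (complex_of_real r) = complex_of_real r" by simp

lemma sq_le_half: fixes n :: real assumes "0 \<le> n" "n\<^sup>2 \<le> n/2" shows "n \<le> 1/2"
proof (rule ccontr)
  assume "\<not> n \<le> 1/2"
  hence "n > 1/2" by simp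
  hence "n * (1/2) < n * n" using mult_strict_left_mono[of "1/2" n n] by simp
  thus False using assms by (simp add: power2_eq_square)
qed

lemma half_est:
  assumes h: "h \<in> X" "st h = h" and M: "0 < nm h"
  shows "nm (sb h (sc (complex_of_real (1 / (3 * nm h / 2)) * complex_of_real (1 / (3 * nm h / 2))) (mu h (mu h h)))) \<le> 3 * nm h / 4"
proof -
  define \<rho> where "\<rho> = 3 * nm h / 2"
  define c where "c = complex_of_real (1 / \<rho>)"
  have rho: "\<rho> > 0" using M by (simp add: \<rho>_def)
  have cm: "cmod c = 1 / \<rho>" using rho by (simp add: c_def norm_divide)
  have cc: "cnj c = c" by (simp add: c_def)
  define q where "q = sc (c*c) (mu h h)"
  have qX: "q \<in> X" using h by (simp add: q_def)
  have qst: "st q = q" using h by (simp add: q_def norm_simps cc)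
  have "nm q = cmod c * cmod c * nm (mu h h)" using h by (simp add: q_def norm_scale Real_Vector_Spaces.norm_mult)
  also have "\<dots> \<le> (1/\<rho>) * (1/\<rho>) * (nm h * nm h)"
    using norm_mult[of h h] h cm rho by (simp add: divide_right_mono)
  also have "\<dots> = 4/9" using M by (simp add: \<rho>_def field_simps power2_eq_square)
  finally have qn: "nm q \<le> 4/9" .
  have hq: "mu h q = mu q h" using h by (simp add: q_def norm_simps)
  obtain t where tX: "t \<in> X" and tst: "st t = t" and tc: "mu h t = mu t h" and tn: "nm t \<le> 1/2"
    and fx: "Fq q t = t" using sqrt_exists[OF qX qst qn h(1) hq] by blast
  have tt: "mu t t = ad (sc (-2) t) (sc (-(c*c)) (mu h h))"
  proof -
    have "sc (-2) t = sc (-2) (Fq q t)" using fx by simp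
    also have "\<dots> = ad q (mu t t)" using qX tX by (simp add: Fq_def scale_scale)
    finally have e: "sc (-2) t = ad q (mu t t)" .
    have "mu t t = ad (ad q (mu t t)) (sc (-1) q)" using qX tX by (simp add: norm_simps)
    also have "\<dots> = ad (sc (-2) t) (sc (-(c*c)) (mu h h))" using h by (simp only: e[symmetric]) (simp add: q_def scale_scale)
    finally show ?thesis .
  qed
  have ttx: "mu t (mu t x) = ad (sc (-2) (mu t x)) (sc (-(c*c)) (mu h (mu h x)))" if "x \<in> X" for x
  proof -
    have "mu t (mu t x) = mu (mu t t) x" using tX that by (simp add: mult_assoc)
    also have "\<dots> = ad (sc (-2) (mu t x)) (sc (-(c*c)) (mu h (mu h x)))"
      using tX h that by (simp add: tt norm_simps)
    finally show ?thesis .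
  qed
  have thx: "mu t (mu h x) = mu h (mu t x)" if "x \<in> X" for x
    using comm_ext[OF h(1) tX that tc] by simp
  have th: "mu t h = mu h t" using tc by simp
  define U where "U = (\<lambda>x. sc c (mu h x))"
  define B where "B = (\<lambda>x. ad x (mu t x))"
  define W where "W = (\<lambda>x. ad (U x) (sc \<i> (B x)))"
  define W' where "W' = (\<lambda>x. ad (U x) (sc (-\<i>) (B x)))"
  have UX: "U x \<in> X" "B x \<in> X" "W x \<in> X" "W' x \<in> X" if "x \<in> X" for x
    using that h tX by (simp_all add: U_def B_def W_def W'_def)
  have i1: "mu (st (U x)) (B x) = mu (st (B x)) (U x)" if "x \<in> X" for x
    using that h tX by (simp add: U_def B_def norm_simps cc tst thx)
  have i2: "ad (mu (st (U x)) (U x)) (mu (st (B x)) (B x)) = mu (st x) x" if "x \<in> X" for x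
    using that h tX by (simp add: U_def B_def norm_simps cc tst thx ttx)
  have Wn: "nm (W x) = nm x" "nm (W' x) = nm x" if x: "x \<in> X" for x
  proof -
    have "(nm (W x))\<^sup>2 = (nm x)\<^sup>2"
      using cstar_id[of "W x"] cstar_id[of x] L1(1)[OF UX(1,2)[OF x] i1[OF x]] i2[OF x] UX[OF x] x
      by (simp add: W_def)
    thus "nm (W x) = nm x" using norm_eq_by_sq[of "W x" x] UX[OF x] x by simp
    have "(nm (W' x))\<^sup>2 = (nm x)\<^sup>2"
      using cstar_id[of "W' x"] cstar_id[of x] L1(2)[OF UX(1,2)[OF x] i1[OF x]] i2[OF x] UX[OF x] x
      by (simp add: W'_def)
    thus "nm (W' x) = nm x" using norm_eq_by_sq[of "W' x" x] UX[OF x] x by simp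
  qed
  have Bn: "nm (B x) \<le> nm x" if x: "x \<in> X" for x
  proof -
    have e: "sb (W x) (W' x) = sc (2*\<i>) (B x)" using x h tX UX(1,2)[OF x] by (simp add: W_def W'_def norm_simps)
    have "nm (sb (W x) (W' x)) \<le> nm (W x) + nm (W' x)" using norm_sub_le[of "W x" "W' x"] UX[OF x] by simp
    hence "2 * nm (B x) \<le> 2 * nm x" using e Wn[OF x] UX[OF x] by (simp add: norm_scale)
    thus ?thesis by simp
  qed
  define a where "a = sc c (ad h (mu h t))"
  have aX: "a \<in> X" using h tX by (simp add: a_def)
  have an: "nm (mu a x) \<le> nm x / 2" if x: "x \<in> X" for x
  proof -
    have e: "sb (W (W x)) (W' (W' x)) = sc (4*\<i>) (mu a x)"
      using x h tX by (simp add: W_def W'_def U_def B_def a_def norm_simps thx ttx th mult.assoc)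
    have "nm (sb (W (W x)) (W' (W' x))) \<le> nm (W (W x)) + nm (W' (W' x))"
      using norm_sub_le[of "W (W x)" "W' (W' x)"] UX[OF x] UX[OF UX(3)[OF x]] UX[OF UX(4)[OF x]] by simp
    hence "4 * nm (mu a x) \<le> 2 * nm x"
      using e Wn[OF x] Wn[OF UX(3)[OF x]] Wn[OF UX(4)[OF x]] UX[OF x] x aX by (simp add: norm_scale)
    thus ?thesis by simp
  qed
  have anorm: "nm a \<le> 1/2"
  proof -
    have "(nm (st a))\<^sup>2 \<le> nm (st a) / 2" using an[of "st a"] aX norm_mult_star[of a] norm_star[of a] by simp
    hence "nm (st a) \<le> 1/2" using sq_le_half norm_nonneg[of "st a"] aX by simp
    thus ?thesis using norm_star aX by simp
  qed
  have e7: "ad a (mu a t) = sc c (sb h (sc (c*c) (mu h (mu h h))))"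
    using h tX by (simp add: a_def norm_simps tt)
  have e8: "st (ad a (mu a t)) = B (st a)" using aX tX by (simp add: B_def norm_simps tst)
  have "nm (ad a (mu a t)) \<le> 1/2"
    using e8 Bn[of "st a"] aX tX norm_star[of "ad a (mu a t)"] norm_star[of a] anorm by simp
  hence "(1/\<rho>) * nm (sb h (sc (c*c) (mu h (mu h h)))) \<le> 1/2" using e7 cm h by (simp add: norm_scale)
  hence "nm (sb h (sc (c*c) (mu h (mu h h)))) \<le> \<rho> / 2" using rho by (simp add: field_simps)
  thus ?thesis by (simp add: c_def \<rho>_def)
qed


lemma ci: assumes "closed_ideal A K"
  shows ci_sub: "K \<subseteq> X" and ci_zero: "zr \<in> K"
    and ci_add: "\<And>a b. a \<in> K \<Longrightarrow> b \<in> K \<Longrightarrow> ad a b \<in> K"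
    and ci_scale: "\<And>a c. a \<in> K \<Longrightarrow> sc c a \<in> K"
    and ci_multl: "\<And>a x. a \<in> K \<Longrightarrow> x \<in> X \<Longrightarrow> mu x a \<in> K"
    and ci_multr: "\<And>a x. a \<in> K \<Longrightarrow> x \<in> X \<Longrightarrow> mu a x \<in> K"
    and ci_lim: "\<And>f a. (\<And>k. f k \<in> K) \<Longrightarrow> a \<in> X \<Longrightarrow> cs_lim A f a \<Longrightarrow> a \<in> K"
  using assms unfolding closed_ideal_def by blast+

lemma ci_sb: "closed_ideal A K \<Longrightarrow> a \<in> K \<Longrightarrow> b \<in> K \<Longrightarrow> sb a b \<in> K"
  by (simp add: sub_def' ci_add ci_scale)

lemma ci_in: "closed_ideal A K \<Longrightarrow> a \<in> K \<Longrightarrow> a \<in> X" using ci_sub by blast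

definition kap :: "'a \<Rightarrow> complex" where
  "kap y = complex_of_real (1 / (3 * nm (mu (st y) y) / 2)) * complex_of_real (1 / (3 * nm (mu (st y) y) / 2)) / 2"
definition stp :: "'a \<Rightarrow> 'a" where
  "stp y = sb y (sc (kap y) (mu y (mu (mu (st y) y) (mu (st y) y))))"

lemma pow5_norm: assumes "h \<in> X" shows "nm (mu h (mu h (mu h (mu h h)))) \<le> (nm h)^5"
proof -
  have a: "nm (mu h h) \<le> nm h ^ 2" using norm_mult[of h h] assms by (simp add: power2_eq_square)
  have b: "nm (mu h (mu h h)) \<le> nm h ^ 3"
  proof -
    have "nm (mu h (mu h h)) \<le> nm h * nm (mu h h)" using norm_mult assms by simp
    also have "\<dots> \<le> nm h * nm h ^ 2" using a assms by (intro mult_left_mono) auto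
    finally show ?thesis by (simp add: power3_eq_cube power2_eq_square)
  qed
  have c: "nm (mu h (mu h (mu h h))) \<le> nm h ^ 4"
  proof -
    have "nm (mu h (mu h (mu h h))) \<le> nm h * nm (mu h (mu h h))" using norm_mult assms by simp
    also have "\<dots> \<le> nm h * nm h ^ 3" using b assms by (intro mult_left_mono) auto
    finally show ?thesis by (simp add: power_Suc[symmetric] del: power_Suc)
  qed
  have "nm (mu h (mu h (mu h (mu h h)))) \<le> nm h * nm (mu h (mu h (mu h h)))" using norm_mult assms by simp
  also have "\<dots> \<le> nm h * nm h ^ 4" using c assms by (intro mult_left_mono) auto
  finally show ?thesis by (simp add: power_Suc[symmetric] del: power_Suc)
qed

lemma stp_props: assumes K: "closed_ideal A K" and y: "y \<in> X" and hK: "mu (st y) y \<in> K"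
  shows "stp y \<in> X" "sb y (stp y) \<in> K" "mu (st (stp y)) (stp y) \<in> K"
    "(nm (stp y))\<^sup>2 \<le> (3/4 + 4/81) * (nm y)\<^sup>2"
proof -
  define h where "h = mu (st y) y"
  have hX: "h \<in> X" and hh: "st h = h" using y by (simp_all add: h_def star_mult)
  have hK': "h \<in> K" using hK by (simp add: h_def)
  have hn: "nm h = (nm y)\<^sup>2" using cstar_id y by (simp add: h_def)
  show sX: "stp y \<in> X" using y by (simp add: stp_def)
  have d: "sb y (stp y) = sc (kap y) (mu y (mu h h))" using y by (simp add: stp_def h_def norm_simps)
  show "sb y (stp y) \<in> K" unfolding d using K hK' hX y by (simp add: ci_scale ci_multl ci_multr)
  define c where "c = complex_of_real (1 / (3 * nm h / 2))"
  have kc: "kap y = c * c / 2" by (simp add: kap_def c_def h_def)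
  have e: "mu (st (stp y)) (stp y) = ad (sb h (sc (c*c) (mu h (mu h h)))) (sc (kap y * kap y) (mu h (mu h (mu h (mu h h)))))"
  proof -
    have cc: "cnj c = c" by (simp add: c_def)
    have sc2: "- (c * c / 2) - c * c / 2 = - (c * c)" by simp
    show ?thesis using y unfolding stp_def kc h_def by (simp add: norm_simps cc sc2)
  qed
  show "mu (st (stp y)) (stp y) \<in> K" unfolding e using K hK' hX
    by (simp add: ci_scale ci_multl ci_multr ci_add ci_sb)
  show "(nm (stp y))\<^sup>2 \<le> (3/4 + 4/81) * (nm y)\<^sup>2"
  proof (cases "nm h = 0")
    case True
    hence "nm y = 0" using hn by simp
    hence "y = zr" using norm_zero_iff y by simp
    thus ?thesis by (simp add: stp_def)
  next
    case False
    hence M: "0 < nm h" using norm_nonneg[OF hX] by linarith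
    have "(nm (stp y))\<^sup>2 = nm (mu (st (stp y)) (stp y))" using cstar_id sX by simp
    also have "\<dots> \<le> nm (sb h (sc (c*c) (mu h (mu h h)))) + nm (sc (kap y * kap y) (mu h (mu h (mu h (mu h h)))))"
      unfolding e using hX norm_tri by simp
    also have "\<dots> \<le> 3 * nm h / 4 + cmod (kap y * kap y) * nm h ^ 5"
      using half_est[OF hX hh M] pow5_norm[OF hX] hX unfolding c_def
      by (intro add_mono) (simp_all add: norm_scale mult_left_mono)
    also have "cmod (kap y * kap y) * nm h ^ 5 = 4/81 * nm h"
      using M by (simp add: kc c_def Real_Vector_Spaces.norm_mult norm_divide power2_eq_square field_simps
          numeral_eq_Suc)
    finally show ?thesis using hn by (simp add: algebra_simps)
  qed
qed

lemma crux: assumes K: "closed_ideal A K" and y: "y \<in> X" and hK: "mu (st y) y \<in> K"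
  shows "y \<in> K"
proof -
  define \<theta> :: real where "\<theta> = 3/4 + 4/81"
  define Y where "Y m = (stp ^^ m) y" for m
  have inv: "Y m \<in> X \<and> mu (st (Y m)) (Y m) \<in> K \<and> sb y (Y m) \<in> K \<and> (nm (Y m))\<^sup>2 \<le> \<theta>^m * (nm y)\<^sup>2" for m
  proof (induct m)
    case 0 thus ?case using y hK K ci_zero by (simp add: Y_def)
  next
    case (Suc m)
    hence a: "Y m \<in> X" "mu (st (Y m)) (Y m) \<in> K" "sb y (Y m) \<in> K" "(nm (Y m))\<^sup>2 \<le> \<theta>^m * (nm y)\<^sup>2"
      by auto
    have YS: "Y (Suc m) = stp (Y m)" by (simp add: Y_def)
    note p = stp_props[OF K a(1,2)]
    have "sb y (Y (Suc m)) = ad (sb y (Y m)) (sb (Y m) (Y (Suc m)))"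
      using a(1) y p(1) YS by (simp add: norm_simps add_neg2)
    hence s: "sb y (Y (Suc m)) \<in> K" using ci_add[OF K a(3)] p(2) YS by simp
    have "(nm (Y (Suc m)))\<^sup>2 \<le> \<theta> * (nm (Y m))\<^sup>2" using p(4) YS by (simp add: \<theta>_def)
    also have "\<dots> \<le> \<theta> * (\<theta>^m * (nm y)\<^sup>2)" using a(4) by (intro mult_left_mono) (auto simp: \<theta>_def)
    finally show ?case using p YS s by simp
  qed
  define r where "r = sqrt \<theta>"
  have r: "0 \<le> r" "r < 1" by (auto simp: r_def \<theta>_def)
  have bnd: "nm (Y m) \<le> r^m * nm y" for m
  proof -
    have r2: "r\<^sup>2 = \<theta>" by (simp add: r_def \<theta>_def)
    have "(r^m)\<^sup>2 = (r\<^sup>2)^m" by (metis power_mult mult.commute)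
    hence "(r^m * nm y)\<^sup>2 = \<theta>^m * (nm y)\<^sup>2" using r2 by (simp add: power_mult_distrib)
    hence "(nm (Y m))\<^sup>2 \<le> (r^m * nm y)\<^sup>2" using inv[of m] by simp
    moreover have "0 \<le> r^m * nm y" using r y by simp
    ultimately show ?thesis by (rule power2_le_imp_le)
  qed
  have g: "(\<lambda>m. r^m * nm y) \<longlonglongrightarrow> 0" using r by (intro tendsto_mult_left_zero LIMSEQ_power_zero) auto
  have "cs_lim A (\<lambda>m. sb y (Y m)) y"
  proof (rule lim_by_bound[OF g])
    fix m
    have "sb (sb y (Y m)) y = sc (-1) (Y m)" using inv[of m] y by (simp add: norm_simps)
    thus "nm (sb (sb y (Y m)) y) \<le> r^m * nm y" using bnd[of m] inv[of m] by (simp add: norm_neg)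
  qed (use inv y in auto)
  thus ?thesis using ci_lim[OF K, of "\<lambda>m. sb y (Y m)" y] inv y by blast
qed

end


locale hs =
  fixes H :: "'h hilbert_data"
  assumes hsa: "hilbert_space H"
begin

abbreviation "HX \<equiv> hs_carrier H"
abbreviation "hz \<equiv> hs_zero H"
abbreviation "hp \<equiv> hs_add H"
abbreviation "hsc \<equiv> hs_scale H"
abbreviation "ip \<equiv> hs_inner H"
abbreviation "hn \<equiv> hs_norm H"

lemmas hax = hsa[unfolded hilbert_space_def Let_def]
lemmas hax0 = hax[THEN conjunct1]
lemmas hax1 = hax[THEN conjunct2, THEN conjunct1]
lemmas hax2 = hax[THEN conjunct2, THEN conjunct2, THEN conjunct1]
lemmas hax3 = hax[THEN conjunct2, THEN conjunct2, THEN conjunct2, THEN conjunct1]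
lemmas hax4 = hax[THEN conjunct2, THEN conjunct2, THEN conjunct2, THEN conjunct2, THEN conjunct1]
lemmas hax5 = hax[THEN conjunct2, THEN conjunct2, THEN conjunct2, THEN conjunct2, THEN conjunct2, THEN conjunct1]
lemmas hax6 = hax[THEN conjunct2, THEN conjunct2, THEN conjunct2, THEN conjunct2, THEN conjunct2, THEN conjunct2, THEN conjunct1]
lemmas hax7 = hax[THEN conjunct2, THEN conjunct2, THEN conjunct2, THEN conjunct2, THEN conjunct2, THEN conjunct2, THEN conjunct2, THEN conjunct1]
lemmas hax8 = hax[THEN conjunct2, THEN conjunct2, THEN conjunct2, THEN conjunct2, THEN conjunct2, THEN conjunct2, THEN conjunct2, THEN conjunct2, THEN conjunct1]
lemmas hax9 = hax[THEN conjunct2, THEN conjunct2, THEN conjunct2, THEN conjunct2, THEN conjunct2, THEN conjunct2, THEN conjunct2, THEN conjunct2, THEN conjunct2, THEN conjunct1]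
lemmas hax10 = hax[THEN conjunct2, THEN conjunct2, THEN conjunct2, THEN conjunct2, THEN conjunct2, THEN conjunct2, THEN conjunct2, THEN conjunct2, THEN conjunct2, THEN conjunct2, THEN conjunct1]
lemmas hax11 = hax[THEN conjunct2, THEN conjunct2, THEN conjunct2, THEN conjunct2, THEN conjunct2, THEN conjunct2, THEN conjunct2, THEN conjunct2, THEN conjunct2, THEN conjunct2, THEN conjunct2, THEN conjunct1]
lemmas hax12 = hax[THEN conjunct2, THEN conjunct2, THEN conjunct2, THEN conjunct2, THEN conjunct2, THEN conjunct2, THEN conjunct2, THEN conjunct2, THEN conjunct2, THEN conjunct2, THEN conjunct2, THEN conjunct2, THEN conjunct1]
lemmas hax13 = hax[THEN conjunct2, THEN conjunct2, THEN conjunct2, THEN conjunct2, THEN conjunct2, THEN conjunct2, THEN conjunct2, THEN conjunct2, THEN conjunct2, THEN conjunct2, THEN conjunct2, THEN conjunct2, THEN conjunct2, THEN conjunct1]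
lemmas hax14 = hax[THEN conjunct2, THEN conjunct2, THEN conjunct2, THEN conjunct2, THEN conjunct2, THEN conjunct2, THEN conjunct2, THEN conjunct2, THEN conjunct2, THEN conjunct2, THEN conjunct2, THEN conjunct2, THEN conjunct2, THEN conjunct2, THEN conjunct1]
lemma h_zero_in[simp]: "hz \<in> HX" using hax0 by blast
lemma h_add_in[simp]: "a \<in> HX \<Longrightarrow> b \<in> HX \<Longrightarrow> hp a b \<in> HX" using hax1 by blast
lemma h_scale_in[simp]: "a \<in> HX \<Longrightarrow> hsc c a \<in> HX" using hax2 by blast
lemma h_add_zero_l[simp]: "a \<in> HX \<Longrightarrow> hp hz a = a" using hax5 by blast
lemma h_add_neg: "a \<in> HX \<Longrightarrow> hp a (hsc (-1) a) = hz" using hax6 by blast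
lemma h_add_assoc: "a \<in> HX \<Longrightarrow> b \<in> HX \<Longrightarrow> c \<in> HX \<Longrightarrow> hp (hp a b) c = hp a (hp b c)" using hax3 by blast
lemma h_add_comm: "a \<in> HX \<Longrightarrow> b \<in> HX \<Longrightarrow> hp a b = hp b a" using hax4 by blast
lemma h_scale_add_r: "a \<in> HX \<Longrightarrow> b \<in> HX \<Longrightarrow> hsc c (hp a b) = hp (hsc c a) (hsc c b)" using hax7 by blast
lemma h_scale_add_l: "a \<in> HX \<Longrightarrow> hsc (c + d) a = hp (hsc c a) (hsc d a)" using hax8 by blast
lemma h_scale_scale: "a \<in> HX \<Longrightarrow> hsc c (hsc d a) = hsc (c * d) a" using hax9 by simp
lemma h_scale_one[simp]: "a \<in> HX \<Longrightarrow> hsc 1 a = a" using hax10 by blast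
lemma ip_add_l: "a \<in> HX \<Longrightarrow> b \<in> HX \<Longrightarrow> c \<in> HX \<Longrightarrow> ip (hp a b) c = ip a c + ip b c" using hax11 by blast
lemma ip_scale_l: "a \<in> HX \<Longrightarrow> b \<in> HX \<Longrightarrow> ip (hsc k a) b = k * ip a b" using hax12 by blast
lemma ip_sym: "a \<in> HX \<Longrightarrow> b \<in> HX \<Longrightarrow> ip b a = cnj (ip a b)" using hax13 by blast
lemma ip_self: "a \<in> HX \<Longrightarrow> Im (ip a a) = 0 \<and> Re (ip a a) \<ge> 0 \<and> (ip a a = 0 \<longleftrightarrow> a = hz)" using hax14 by blast

lemma ip_add_r: "a \<in> HX \<Longrightarrow> b \<in> HX \<Longrightarrow> c \<in> HX \<Longrightarrow> ip a (hp b c) = ip a b + ip a c"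
proof -
  assume abc: "a \<in> HX" "b \<in> HX" "c \<in> HX"
  have "ip a (hp b c) = cnj (ip (hp b c) a)" using abc ip_sym[of "hp b c" a] by simp
  also have "\<dots> = cnj (ip b a) + cnj (ip c a)" using abc by (simp add: ip_add_l)
  also have "\<dots> = ip a b + ip a c" using abc ip_sym[of a b] ip_sym[of a c] by simp
  finally show ?thesis .
qed
lemma ip_scale_r: "a \<in> HX \<Longrightarrow> b \<in> HX \<Longrightarrow> ip a (hsc k b) = cnj k * ip a b"
proof -
  assume ab: "a \<in> HX" "b \<in> HX"
  have "ip a (hsc k b) = cnj (ip (hsc k b) a)" using ab ip_sym[of "hsc k b" a] by simp
  also have "\<dots> = cnj k * cnj (ip b a)" using ab by (simp add: ip_scale_l)
  also have "\<dots> = cnj k * ip a b" using ab ip_sym[of a b] by simp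
  finally show ?thesis .
qed

lemma h_scale_zero_l[simp]: "a \<in> HX \<Longrightarrow> hsc 0 a = hz"
proof -
  assume a: "a \<in> HX"
  define z where "z = hsc 0 a"
  have zX: "z \<in> HX" using a by (simp add: z_def)
  have zz: "hp z z = z" using h_scale_add_l[OF a, of 0 0] by (simp add: z_def)
  have "hz = hp z (hsc (-1) z)" using zX by (simp add: h_add_neg)
  also have "\<dots> = hp (hp z z) (hsc (-1) z)" by (simp only: zz)
  also have "\<dots> = hp z (hp z (hsc (-1) z))" using zX by (simp add: h_add_assoc)
  also have "\<dots> = z" using zX h_add_comm[of z hz] by (simp add: h_add_neg)
  finally show ?thesis by (simp add: z_def)
qed

lemma ip_zero_l[simp]: "a \<in> HX \<Longrightarrow> ip hz a = 0"
  using ip_scale_l[of hz a 0] by simp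
lemma ip_zero_r[simp]: "a \<in> HX \<Longrightarrow> ip a hz = 0"
  using ip_sym[of hz a] by simp

lemma ip_real: "a \<in> HX \<Longrightarrow> ip a a = complex_of_real ((hn a)\<^sup>2)"
  using ip_self[of a] by (simp add: hs_norm_def complex_eq_iff)

lemma hn_nonneg[simp]: "a \<in> HX \<Longrightarrow> hn a \<ge> 0" using ip_self[of a] by (simp add: hs_norm_def)

lemma hn_scale: "a \<in> HX \<Longrightarrow> hn (hsc c a) = cmod c * hn a"
proof -
  assume a: "a \<in> HX"
  have cc: "c * cnj c = complex_of_real ((cmod c)\<^sup>2)" by (metis complex_norm_square of_real_power)
  have "ip (hsc c a) (hsc c a) = c * cnj c * ip a a" using a by (simp add: ip_scale_l ip_scale_r)
  hence "complex_of_real ((hn (hsc c a))\<^sup>2) = complex_of_real ((cmod c)\<^sup>2 * (hn a)\<^sup>2)"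
    using a ip_real[of a] ip_real[of "hsc c a"] cc by simp
  hence "(hn (hsc c a))\<^sup>2 = (cmod c * hn a)\<^sup>2" by (simp only: of_real_eq_iff power_mult_distrib)
  thus ?thesis using a by (simp add: power2_eq_iff_nonneg)
qed

lemma h_cancel: assumes "a \<in> HX" "b \<in> HX" shows "hp (hp a (hsc (-1) b)) b = a"
proof -
  have "hp (hp a (hsc (-1) b)) b = hp a (hp (hsc (-1) b) b)" using assms by (simp add: h_add_assoc)
  also have "hp (hsc (-1) b) b = hz" using assms h_add_comm[of b "hsc (-1) b"] h_add_neg[of b] by simp
  finally show ?thesis using assms h_add_comm[of a hz] by simp
qed

lemma h_sub_zero: "a \<in> HX \<Longrightarrow> b \<in> HX \<Longrightarrow> hp a (hsc (-1) b) = hz \<Longrightarrow> a = b"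
  using h_cancel[of a b] by simp

lemma h_eq_by_ip: assumes "a \<in> HX" "b \<in> HX" "\<And>y. y \<in> HX \<Longrightarrow> ip a y = ip b y" shows "a = b"
proof -
  define d where "d = hp a (hsc (-1) b)"
  have dX: "d \<in> HX" using assms by (simp add: d_def)
  have "ip d d = ip a d - ip b d" using assms dX by (simp add: d_def ip_add_l ip_scale_l)
  hence "ip d d = 0" using assms(3)[OF dX] by simp
  hence "d = hz" using ip_self[OF dX] by simp
  thus ?thesis using h_sub_zero[of a b] assms by (simp add: d_def)
qed

lemma cauchy_schwarz_unit: assumes x: "x \<in> HX" and e: "e \<in> HX" "ip e e = 1"
  shows "cmod (ip x e) \<le> hn x"
proof -
  define \<alpha> where "\<alpha> = ip x e"
  define w where "w = hp x (hsc (-\<alpha>) e)"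
  have wX: "w \<in> HX" using x e by (simp add: w_def)
  have iex: "ip e x = cnj \<alpha>" using ip_sym[of x e] x e by (simp add: \<alpha>_def)
  have "ip w w = ip x x - \<alpha> * cnj \<alpha>"
    using x e iex by (simp add: w_def ip_add_l ip_add_r ip_scale_l ip_scale_r \<alpha>_def[symmetric] algebra_simps)
  moreover have "\<alpha> * cnj \<alpha> = complex_of_real ((cmod \<alpha>)\<^sup>2)" by (metis complex_norm_square of_real_power)
  ultimately have "complex_of_real ((hn w)\<^sup>2) = complex_of_real ((hn x)\<^sup>2 - (cmod \<alpha>)\<^sup>2)"
    using ip_real[OF wX] ip_real[OF x] by simp
  hence "(hn w)\<^sup>2 = (hn x)\<^sup>2 - (cmod \<alpha>)\<^sup>2" by (simp only: of_real_eq_iff)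
  hence "(cmod \<alpha>)\<^sup>2 \<le> (hn x)\<^sup>2" by (metis diff_ge_0_iff_ge zero_le_power2)
  thus ?thesis unfolding \<alpha>_def using hn_nonneg[OF x] by (rule power2_le_imp_le)
qed

lemma h_sub_scale: "e \<in> HX \<Longrightarrow> hp (hsc a e) (hsc (-1) (hsc b e)) = hsc (a - b) e"
  by (simp add: h_scale_scale h_scale_add_l[symmetric])

definition Pr :: "'h \<Rightarrow> 'h \<Rightarrow> 'h" where "Pr e x = hsc (ip x e) e"

lemma Pr_compact: assumes e: "e \<in> HX" "ip e e = 1" shows "compact_op H (Pr e)"
  unfolding compact_op_def
proof (intro conjI ballI allI impI)
  fix x assume "x \<in> HX" thus "Pr e x \<in> HX" using e by (simp add: Pr_def)
next
  fix x y assume "x \<in> HX" "y \<in> HX"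
  thus "Pr e (hp x y) = hp (Pr e x) (Pr e y)" using e by (simp add: Pr_def ip_add_l h_scale_add_l)
next
  fix c x assume "x \<in> HX"
  thus "Pr e (hsc c x) = hsc c (Pr e x)" using e by (simp add: Pr_def ip_scale_l h_scale_scale)
next
  fix f :: "nat \<Rightarrow> 'h" and M :: real
  assume f: "\<forall>k. f k \<in> HX \<and> hn (f k) \<le> M"
  have "\<forall>k. cmod (ip (f k) e) \<le> M" using cauchy_schwarz_unit f e by (meson order_trans)
  from Bolzano_Weierstrass_complex_disc[OF this] obtain g z where g: "strict_mono g"
    and cv: "\<forall>\<epsilon>>0. \<exists>N::nat. \<forall>n\<ge>N. cmod (ip (f (g n)) e - z) < \<epsilon>" by blast
  have "(hn e)\<^sup>2 = 1" using ip_real[OF e(1)] e(2) by (metis of_real_eq_1_iff)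
  hence "hn e = 1" using hn_nonneg[OF e(1)] by (simp add: power2_eq_1_iff)
  hence nm: "hn (hp (Pr e (f (g k))) (hsc (-1) (hsc z e))) = cmod (ip (f (g k)) e - z)" for k
    using e by (simp add: Pr_def h_sub_scale hn_scale)
  have "hs_lim H (\<lambda>k. Pr e (f (g k))) (hsc z e)"
    unfolding hs_lim_def hs_sub_def nm
    using cv by (simp add: LIMSEQ_iff)
  moreover have "hsc z e \<in> HX" using e by simp
  ultimately show "\<exists>g y. strict_mono g \<and> y \<in> HX \<and> hs_lim H (\<lambda>k. Pr e (f (g k))) y" using g by blast
qed

end


definition skip :: "nat \<Rightarrow> nat \<Rightarrow> nat" where "skip j0 j = (if j < j0 then j else Suc j)"

lemma sum_skip: fixes f :: "nat \<Rightarrow> 'b::comm_monoid_add" assumes "j0 < Suc N"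
  shows "(\<Sum>j<Suc N. f j) = f j0 + (\<Sum>i<N. f (skip j0 i))"
proof -
  have inj: "inj_on (skip j0) {..<N}" by (auto simp: inj_on_def skip_def split: if_splits)
  have img: "{..<Suc N} = insert j0 (skip j0 ` {..<N})"
  proof (rule set_eqI, rule iffI)
    fix x assume x: "x \<in> {..<Suc N}"
    show "x \<in> insert j0 (skip j0 ` {..<N})"
    proof (cases "x = j0")
      case False
      show ?thesis
      proof (cases "x < j0")
        case True thus ?thesis using x assms by (auto simp: skip_def image_iff intro!: bexI[of _ x])
      next
        case False
        hence "x = skip j0 (x - 1)" "x - 1 < N" using \<open>x \<noteq> j0\<close> x by (auto simp: skip_def)
        thus ?thesis by blast
      qed
    qed simp
  next
    fix x assume "x \<in> insert j0 (skip j0 ` {..<N})"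
    thus "x \<in> {..<Suc N}" using assms by (auto simp: skip_def)
  qed
  have nin: "j0 \<notin> skip j0 ` {..<N}" by (auto simp: skip_def split: if_splits)
  show ?thesis unfolding img using nin inj by (simp add: sum.reindex)
qed

lemma skip_ne: "skip j0 i \<noteq> j0" by (simp add: skip_def)
lemma skip_lt: "i < N \<Longrightarrow> skip j0 i < Suc N" by (simp add: skip_def)

lemma la: fixes b :: "nat \<Rightarrow> nat \<Rightarrow> complex"
  assumes "m < N" shows "\<exists>z. (\<exists>j<N. z j \<noteq> 0) \<and> (\<forall>l<m. (\<Sum>j<N. b l j * z j) = 0)"
  using assms
proof (induct m arbitrary: N b)
  case 0
  show ?case by (rule exI[of _ "\<lambda>j. if j = 0 then 1 else 0"]) (use 0 in auto)
next
  case (Suc m)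
  show ?case
  proof (cases "\<forall>j<N. b m j = 0")
    case True
    obtain z where z: "\<exists>j<N. z j \<noteq> 0" "\<forall>l<m. (\<Sum>j<N. b l j * z j) = 0"
      using Suc.hyps[of N b] Suc.prems by auto
    have "\<forall>l<Suc m. (\<Sum>j<N. b l j * z j) = 0"
    proof (intro allI impI)
      fix l assume "l < Suc m"
      thus "(\<Sum>j<N. b l j * z j) = 0"
        using z True by (cases "l = m") auto
    qed
    thus ?thesis using z by blast
  next
    case False
    then obtain j0 where j0: "j0 < N" "b m j0 \<noteq> 0" by auto
    obtain N' where N': "N = Suc N'" using Suc.prems by (cases N) auto
    define b' where "b' l i = b l (skip j0 i) - b l j0 * b m (skip j0 i) / b m j0" for l i
    obtain w where w: "\<exists>j<N'. w j \<noteq> 0" "\<forall>l<m. (\<Sum>i<N'. b' l i * w i) = 0"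
      using Suc.hyps[of N' b'] Suc.prems N' by auto
    define S where "S = (\<Sum>i<N'. b m (skip j0 i) * w i)"
    define z where "z j = (if j = j0 then - S / b m j0 else w (if j < j0 then j else j - 1))" for j
    have zs: "z (skip j0 i) = w i" for i by (auto simp: z_def skip_def)
    have split: "(\<Sum>j<N. b l j * z j) = b l j0 * z j0 + (\<Sum>i<N'. b l (skip j0 i) * w i)" for l
      unfolding N' using sum_skip[of j0 N' "\<lambda>j. b l j * z j"] j0 N' zs by simp
    have eqs: "\<forall>l<Suc m. (\<Sum>j<N. b l j * z j) = 0"
    proof (intro allI impI)
      fix l assume l: "l < Suc m"
      show "(\<Sum>j<N. b l j * z j) = 0"
      proof (cases "l = m")
        case True thus ?thesis using j0 by (simp only: split) (simp add: z_def S_def)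
      next
        case False
        hence lm: "l < m" using l by simp
        have "(\<Sum>j<N. b l j * z j) = - (b l j0 / b m j0) * S + (\<Sum>i<N'. b l (skip j0 i) * w i)"
          using j0 by (simp only: split) (simp add: z_def)
        also have "\<dots> = (\<Sum>i<N'. b' l i * w i)"
          by (simp add: S_def b'_def sum_distrib_left sum_subtractf[symmetric] sum.distrib[symmetric]
              algebra_simps)
        also have "\<dots> = 0" using w lm by simp
        finally show ?thesis .
      qed
    qed
    obtain i where i: "i < N'" "w i \<noteq> 0" using w by blast
    have "skip j0 i < N" "z (skip j0 i) \<noteq> 0" using i skip_lt zs N' by auto
    thus ?thesis using eqs by blast
  qed
qed


lemma final_contra: fixes G \<gamma> \<beta> :: "nat \<Rightarrow> nat \<Rightarrow> nat \<Rightarrow> complex"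
  assumes G: "\<And>k i j. i \<le> n \<Longrightarrow> j \<le> n \<Longrightarrow> G k i j = (\<Sum>m<n. \<gamma> k i m * \<beta> k j m)"
  and lim: "\<And>i j. i \<le> n \<Longrightarrow> j \<le> n \<Longrightarrow> (\<lambda>k. G k i j) \<longlonglongrightarrow> (if i = j then 1 else 0)"
  shows False
proof -
  define \<delta> :: "nat \<Rightarrow> nat \<Rightarrow> complex" where "\<delta> i j = (if i = j then 1 else 0)" for i j
  define \<epsilon> :: real where "\<epsilon> = 1 / (Suc n)"
  have \<epsilon>: "\<epsilon> > 0" by (simp add: \<epsilon>_def)
  have ev: "\<forall>\<^sub>F k in sequentially. \<forall>p\<in>{..n}\<times>{..n}. cmod (G k (fst p) (snd p) - \<delta> (fst p) (snd p)) < \<epsilon>"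
  proof (rule eventually_ball_finite)
    show "finite ({..n}\<times>{..n})" by simp
    show "\<forall>p\<in>{..n}\<times>{..n}. \<forall>\<^sub>F k in sequentially. cmod (G k (fst p) (snd p) - \<delta> (fst p) (snd p)) < \<epsilon>"
    proof
      fix p assume p: "p \<in> {..n}\<times>{..n}"
      have "(\<lambda>k. G k (fst p) (snd p)) \<longlonglongrightarrow> \<delta> (fst p) (snd p)"
        using lim[of "fst p" "snd p"] p unfolding \<delta>_def by (auto simp: mem_Times_iff)
      thus "\<forall>\<^sub>F k in sequentially. cmod (G k (fst p) (snd p) - \<delta> (fst p) (snd p)) < \<epsilon>"
        using \<epsilon> by (simp add: tendsto_iff dist_norm)
    qed
  qed
  then obtain k where k: "\<And>i j. i \<le> n \<Longrightarrow> j \<le> n \<Longrightarrow> cmod (G k i j - \<delta> i j) < \<epsilon>"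
    by (metis (no_types, lifting) eventually_sequentially order_refl mem_Sigma_iff atMost_iff fst_conv snd_conv)
  obtain z where z: "\<exists>j<Suc n. z j \<noteq> 0" "\<forall>l<n. (\<Sum>j<Suc n. \<beta> k j l * z j) = 0"
    using la[of n "Suc n" "\<lambda>l j. \<beta> k j l"] by auto
  have Gz: "(\<Sum>j<Suc n. G k i j * z j) = 0" if i: "i \<le> n" for i
  proof -
    have "(\<Sum>j<Suc n. G k i j * z j) = (\<Sum>j<Suc n. \<Sum>m<n. \<gamma> k i m * \<beta> k j m * z j)"
      using G i by (intro sum.cong) (auto simp: sum_distrib_right)
    also have "\<dots> = (\<Sum>m<n. \<Sum>j<Suc n. \<gamma> k i m * \<beta> k j m * z j)"
      by (rule sum.swap)
    also have "\<dots> = (\<Sum>m<n. \<gamma> k i m * (\<Sum>j<Suc n. \<beta> k j m * z j))"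
      by (simp add: sum_distrib_left mult.assoc del: sum.lessThan_Suc)
    also have "\<dots> = 0" using z(2) by simp
    finally show ?thesis .
  qed
  obtain j0 where j0: "j0 < Suc n" "\<And>j. j < Suc n \<Longrightarrow> cmod (z j) \<le> cmod (z j0)"
  proof -
    have "finite ((\<lambda>j. cmod (z j)) ` {..<Suc n})" "(\<lambda>j. cmod (z j)) ` {..<Suc n} \<noteq> {}" by auto
    then obtain j0 where "j0 \<in> {..<Suc n}" "cmod (z j0) = Max ((\<lambda>j. cmod (z j)) ` {..<Suc n})"
      by (metis (no_types, lifting) Max_in imageE)
    thus ?thesis using that by (metis Max_ge finite_imageI finite_lessThan image_eqI lessThan_iff)
  qed
  define M where "M = cmod (z j0)"
  have M: "M > 0"
  proof -
    obtain j1 where j1: "j1 < Suc n" "z j1 \<noteq> 0" using z(1) by blast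
    hence "0 < cmod (z j1)" by simp
    thus ?thesis using j0(2)[OF j1(1)] unfolding M_def by linarith
  qed
  have dz: "(\<Sum>j<Suc n. \<delta> j0 j * z j) = (\<Sum>j<Suc n. if j = j0 then z j else 0)"
    by (intro sum.cong) (auto simp: \<delta>_def)
  also have "\<dots> = z j0" using j0 by (simp only: sum.delta finite_lessThan) simp
  finally have "z j0 = (\<Sum>j<Suc n. \<delta> j0 j * z j) - (\<Sum>j<Suc n. G k j0 j * z j)"
    using Gz[of j0] j0 by simp
  also have "\<dots> = (\<Sum>j<Suc n. (\<delta> j0 j - G k j0 j) * z j)" by (simp add: sum_subtractf left_diff_distrib)
  finally have "M \<le> (\<Sum>j<Suc n. cmod ((\<delta> j0 j - G k j0 j) * z j))"
    unfolding M_def by (metis norm_sum)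
  also have "\<dots> < (\<Sum>j<Suc n. \<epsilon> * M)"
  proof (rule sum_strict_mono)
    fix j assume j: "j \<in> {..<Suc n}"
    have "cmod ((\<delta> j0 j - G k j0 j) * z j) = cmod (G k j0 j - \<delta> j0 j) * cmod (z j)"
      by (simp add: Real_Vector_Spaces.norm_mult norm_minus_commute)
    also have "\<dots> \<le> cmod (G k j0 j - \<delta> j0 j) * M"
      using j0 j by (intro mult_left_mono) (auto simp: M_def)
    also have "\<dots> < \<epsilon> * M" using k[of j0 j] j j0 M by (intro mult_strict_right_mono) auto
    finally show "cmod ((\<delta> j0 j - G k j0 j) * z j) < \<epsilon> * M" .
  qed auto
  also have "\<dots> = M" by (simp add: \<epsilon>_def)
  finally show False by simp
qed


context cs begin

lemma cs_sum_in: "(\<And>l. l < N \<Longrightarrow> f l \<in> X) \<Longrightarrow> cs_sum A f N \<in> X"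
  by (induct N) auto
lemma cs_sum_cong: "(\<And>l. l < N \<Longrightarrow> f l = g l) \<Longrightarrow> cs_sum A f N = cs_sum A g N"
  by (induct N) auto
lemma cs_sum_zero: "(\<And>l. l < N \<Longrightarrow> f l = zr) \<Longrightarrow> cs_sum A f N = zr"
  by (induct N) auto
lemma cs_sum_single: assumes "m < N" "f m \<in> X" "\<And>l. l < N \<Longrightarrow> l \<noteq> m \<Longrightarrow> f l = zr"
  shows "cs_sum A f N = f m"
  using assms
proof (induct N)
  case (Suc N)
  show ?case
  proof (cases "m = N")
    case True
    have "cs_sum A f N = zr" using Suc.prems True by (intro cs_sum_zero) auto
    thus ?thesis using True Suc.prems by simp
  next
    case False
    hence "cs_sum A f N = f m" using Suc by auto
    thus ?thesis using False Suc.prems by simp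
  qed
qed simp
lemma cs_sum_K: "closed_ideal A K \<Longrightarrow> (\<And>l. l < N \<Longrightarrow> f l \<in> K) \<Longrightarrow> cs_sum A f N \<in> K"
  by (induct N) (auto intro: ci_add ci_zero)

end

locale mainctx = cs A + hs H for A :: "'a cstar_data" and H :: "'h hilbert_data" +
  fixes I J :: "'a set" and \<phi> :: "'a \<Rightarrow> 'h \<Rightarrow> 'h"
  assumes I: "closed_ideal A I" and J: "closed_ideal A J" and JI: "J \<subseteq> I" and IJ: "I \<noteq> J"
    and qic: "quotient_iso_compacts A I J H \<phi>"
begin

lemma q_compact: "a \<in> I \<Longrightarrow> compact_op H (\<phi> a)" using qic unfolding quotient_iso_compacts_def by blast
lemma q_add: "a \<in> I \<Longrightarrow> b \<in> I \<Longrightarrow> x \<in> HX \<Longrightarrow> \<phi> (ad a b) x = hp (\<phi> a x) (\<phi> b x)"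
  using qic unfolding quotient_iso_compacts_def by blast
lemma q_scale: "a \<in> I \<Longrightarrow> x \<in> HX \<Longrightarrow> \<phi> (sc c a) x = hsc c (\<phi> a x)"
  using qic unfolding quotient_iso_compacts_def by blast
lemma q_mult: "a \<in> I \<Longrightarrow> b \<in> I \<Longrightarrow> x \<in> HX \<Longrightarrow> \<phi> (mu a b) x = \<phi> a (\<phi> b x)"
  using qic unfolding quotient_iso_compacts_def by blast
lemma q_adj: "a \<in> I \<Longrightarrow> x \<in> HX \<Longrightarrow> y \<in> HX \<Longrightarrow> ip (\<phi> a x) y = ip x (\<phi> (st a) y)"
  using qic unfolding quotient_iso_compacts_def by blast
lemma q_surj: "compact_op H T \<Longrightarrow> \<exists>a\<in>I. \<forall>x\<in>HX. \<phi> a x = T x"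
  using qic unfolding quotient_iso_compacts_def by blast
lemma q_ker: "a \<in> I \<Longrightarrow> a \<in> J \<longleftrightarrow> (\<forall>x\<in>HX. \<phi> a x = hz)"
  using qic unfolding quotient_iso_compacts_def by blast

lemma q_in[simp]: "a \<in> I \<Longrightarrow> x \<in> HX \<Longrightarrow> \<phi> a x \<in> HX"
  using q_compact unfolding compact_op_def by blast
lemma q_lin_scale: "a \<in> I \<Longrightarrow> x \<in> HX \<Longrightarrow> \<phi> a (hsc c x) = hsc c (\<phi> a x)"
  using q_compact unfolding compact_op_def by blast
lemma q_sub: "a \<in> I \<Longrightarrow> b \<in> I \<Longrightarrow> x \<in> HX \<Longrightarrow> \<phi> (sb a b) x = hp (\<phi> a x) (hsc (-1) (\<phi> b x))"
  using I by (simp add: sub_def' q_add q_scale ci_scale)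

lemma IX: "a \<in> I \<Longrightarrow> a \<in> X" using ci_in[OF I] .
lemma JX: "a \<in> J \<Longrightarrow> a \<in> I" using JI by blast

lemma I_multl: "a \<in> I \<Longrightarrow> x \<in> X \<Longrightarrow> mu x a \<in> I" using ci_multl[OF I] .
lemma I_multr: "a \<in> I \<Longrightarrow> x \<in> X \<Longrightarrow> mu a x \<in> I" using ci_multr[OF I] .

lemma zr_J: "zr \<in> J" using ci_zero[OF J] .
lemma phi_zr: "x \<in> HX \<Longrightarrow> \<phi> zr x = hz" using q_ker[of zr] zr_J JX by blast

lemma unit_exists: "\<exists>e\<in>HX. ip e e = 1"
proof -
  obtain a0 where a0: "a0 \<in> I" "a0 \<notin> J" using JI IJ by blast
  then obtain x where x: "x \<in> HX" "\<phi> a0 x \<noteq> hz" using q_ker by blast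
  define w where "w = \<phi> a0 x"
  have wX: "w \<in> HX" using a0 x by (simp add: w_def)
  have "ip w w \<noteq> 0" using ip_self[OF wX] x by (simp add: w_def)
  hence hw: "hn w \<noteq> 0" using ip_real[OF wX] by auto
  define e where "e = hsc (complex_of_real (1 / hn w)) w"
  have "ip e e = complex_of_real (1 / hn w) * complex_of_real (1 / hn w) * complex_of_real ((hn w)\<^sup>2)"
    using wX ip_real[OF wX] by (simp add: e_def ip_scale_l ip_scale_r)
  also have "\<dots> = 1" using hw by (simp add: power2_eq_square field_simps)
  finally show ?thesis using wX by (auto simp: e_def)
qed

end

locale mainctx2 = mainctx +
  fixes e p
  assumes eX: "e \<in> HX" and ee: "ip e e = 1" and pI: "p \<in> I" and pP: "\<And>x. x \<in> HX \<Longrightarrow> \<phi> p x = Pr e x"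
begin

lemma pX: "p \<in> X" using IX pI .
lemma Pr_in[simp]: "x \<in> HX \<Longrightarrow> Pr e x \<in> HX" using eX by (simp add: Pr_def)
lemma Pr_e: "Pr e e = e" using eX ee by (simp add: Pr_def)
lemma Pr_idem: "x \<in> HX \<Longrightarrow> Pr e (Pr e x) = Pr e x" using eX ee by (simp add: Pr_def ip_scale_l h_scale_scale)
lemma e_nz: "e \<noteq> hz" using ee eX by auto

lemma stpI: "st p \<in> I"
proof (rule crux[OF I])
  show "st p \<in> X" using pX by simp
  show "mu (st (st p)) (st p) \<in> I" using pX pI by (simp add: I_multr)
qed

definition om :: "'a \<Rightarrow> complex" where "om z = ip (\<phi> z e) e"

lemma om_add: "a \<in> I \<Longrightarrow> b \<in> I \<Longrightarrow> om (ad a b) = om a + om b"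
  using eX by (simp add: om_def q_add ip_add_l)
lemma om_scale: "a \<in> I \<Longrightarrow> om (sc c a) = c * om a"
  using eX by (simp add: om_def q_scale ip_scale_l)
lemma om_zr: "om zr = 0" using eX by (simp add: om_def phi_zr)
lemma om_sub: "a \<in> I \<Longrightarrow> b \<in> I \<Longrightarrow> om (sb a b) = om a - om b"
  using I by (simp add: sub_def' om_add om_scale ci_scale)

lemma pw_P: assumes q: "q \<in> I" "\<And>x. x \<in> HX \<Longrightarrow> \<phi> q x = Pr e x" shows "1 \<le> nm q"
proof (rule ccontr)
  assume "\<not> 1 \<le> nm q"
  hence q1: "nm q < 1" by simp
  have qX: "q \<in> X" using IX q(1) .
  define pw where "pw k = ((\<lambda>w. mu q w) ^^ k) q" for k
  have pwI: "pw k \<in> I" for k by (induct k) (auto simp: pw_def q(1) I_multl qX)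
  have pwP: "\<phi> (pw k) x = Pr e x" if "x \<in> HX" for k x
    using that
  proof (induct k arbitrary: x)
    case 0 thus ?case using q by (simp add: pw_def)
  next
    case (Suc k)
    have "\<phi> (pw (Suc k)) x = \<phi> q (\<phi> (pw k) x)" using q(1) pwI Suc.prems by (simp add: pw_def q_mult)
    thus ?case using Suc q Pr_idem by simp
  qed
  have pwn: "nm (pw k) \<le> nm q ^ Suc k" for k
  proof (induct k)
    case 0 thus ?case by (simp add: pw_def)
  next
    case (Suc k)
    have "nm (pw (Suc k)) \<le> nm q * nm (pw k)" using norm_mult qX IX[OF pwI[of k]] by (simp add: pw_def)
    also have "\<dots> \<le> nm q * nm q ^ Suc k" using Suc qX by (intro mult_left_mono) auto
    finally show ?case by simp
  qed
  have dJ: "sb q (pw k) \<in> J" for k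
  proof -
    have "\<forall>x\<in>HX. \<phi> (sb q (pw k)) x = hz"
      using q pwI pwP by (simp add: q_sub h_add_neg)
    thus ?thesis using q_ker[of "sb q (pw k)"] q(1) pwI I by (simp add: ci_sb)
  qed
  have g: "(\<lambda>k. nm q ^ Suc k) \<longlonglongrightarrow> 0"
    using q1 qX by (intro LIMSEQ_power_zero[THEN LIMSEQ_Suc]) auto
  have "cs_lim A (\<lambda>k. sb q (pw k)) q"
  proof (rule lim_by_bound[OF g])
    fix k
    have "sb (sb q (pw k)) q = sc (-1) (pw k)" using qX IX[OF pwI[of k]] by (simp add: norm_simps)
    thus "nm (sb (sb q (pw k)) q) \<le> nm q ^ Suc k" using pwn[of k] IX[OF pwI[of k]] by (simp add: norm_neg)
  qed (use qX IX pwI in auto)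
  hence "q \<in> J" using ci_lim[OF J dJ qX] by simp
  hence "\<phi> q e = hz" using q_ker q(1) eX by blast
  thus False using q(2)[OF eX] Pr_e e_nz by simp
qed

lemma om_bound: assumes z: "z \<in> I" shows "cmod (om z) \<le> nm p * nm p * nm z"
proof (cases "om z = 0")
  case True thus ?thesis using pX IX[OF z] by simp
next
  case False
  define y where "y = mu p (mu z p)"
  have yI: "y \<in> I" using pI z IX by (simp add: y_def I_multr)
  have zX: "z \<in> X" using IX z .
  have phy: "\<phi> y x = hsc (om z) (Pr e x)" if x: "x \<in> HX" for x
  proof -
    have "\<phi> y x = Pr e (\<phi> z (Pr e x))" using x pI z I_multr pX by (simp add: y_def q_mult pP)
    also have "\<phi> z (Pr e x) = hsc (ip x e) (\<phi> z e)" using z eX x by (simp add: Pr_def q_lin_scale)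
    finally show ?thesis using x z eX
      by (simp add: Pr_def ip_scale_l h_scale_scale om_def mult.commute)
  qed
  define y' where "y' = sc (1 / om z) y"
  have y'I: "y' \<in> I" using yI I by (simp add: y'_def ci_scale)
  have "\<phi> y' x = Pr e x" if "x \<in> HX" for x
    using that yI False by (simp add: y'_def q_scale phy h_scale_scale)
  hence "1 \<le> nm y'" using pw_P y'I by blast
  hence "1 \<le> nm y / cmod (om z)" using IX[OF yI] by (simp add: y'_def norm_scale norm_divide)
  hence "cmod (om z) \<le> nm y" using False by (simp add: field_simps)
  also have "nm y \<le> nm p * (nm z * nm p)"
    using norm_mult[of p "mu z p"] norm_mult[of z p] pX zX
    by (simp add: y_def) (meson mult_left_mono norm_nonneg order_trans)
  finally show ?thesis by (simp add: ac_simps)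
qed


lemma ppJ: "sb p (mu p p) \<in> J"
proof -
  have ppI: "mu p p \<in> I" using pI pX I_multr by simp
  have "\<forall>x\<in>HX. \<phi> (sb p (mu p p)) x = hz"
    using pI ppI by (simp add: q_sub q_mult pP Pr_idem h_add_neg)
  thus ?thesis using q_ker[of "sb p (mu p p)"] pI ppI I by (simp add: ci_sb)
qed

lemma factor: assumes r: "r \<in> X" "r' \<in> X"
  shows "om (mu (mu r (st p)) (mu p (st r'))) = om (mu r (st p)) * om (mu p (st r'))"
proof -
  define u where "u = mu r (st p)"
  define v where "v = mu p (st r')"
  have uI: "u \<in> I" using stpI r by (simp add: u_def I_multl)
  have vI: "v \<in> I" using pI r by (simp add: v_def I_multr)
  have pvI: "mu p v \<in> I" using pI vI IX I_multr by simp
  have "sb v (mu p v) = mu (sb p (mu p p)) (st r')" using pX r by (simp add: v_def mult_sub_r mult_assoc)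
  hence "sb v (mu p v) \<in> J" using ci_multr[OF J ppJ] r by simp
  hence "\<phi> (sb v (mu p v)) e = hz" using q_ker vI pvI I eX by (simp add: ci_sb)
  hence "hp (\<phi> v e) (hsc (-1) (\<phi> (mu p v) e)) = hz" using q_sub vI pvI eX by simp
  hence ve: "\<phi> v e = \<phi> (mu p v) e" using h_sub_zero vI pvI eX by simp
  also have "\<dots> = Pr e (\<phi> v e)" using pI vI eX by (simp add: q_mult pP)
  finally have ve2: "\<phi> v e = hsc (om v) e" by (simp add: Pr_def om_def)
  have "om (mu u v) = ip (\<phi> u (\<phi> v e)) e" using uI vI eX unfolding om_def[of "mu u v"] by (simp add: q_mult)
  also have "\<dots> = ip (hsc (om v) (\<phi> u e)) e" using uI eX by (simp only: ve2 q_lin_scale)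
  also have "\<dots> = om v * om u" using uI eX by (simp add: ip_scale_l om_def[of u])
  finally show ?thesis by (simp add: u_def v_def)
qed

lemma om_a: "om (mu (st p) p) = 1"
proof -
  have "om (mu (st p) p) = ip (\<phi> (st p) e) e" using stpI pI eX by (simp add: om_def q_mult pP Pr_e)
  also have "\<dots> = ip e (\<phi> (st (st p)) e)" using q_adj stpI eX by blast
  also have "\<dots> = 1" using pX eX ee by (simp add: pP Pr_e)
  finally show ?thesis .
qed


lemma om_sum: "(\<And>l. l < N \<Longrightarrow> f l \<in> I) \<Longrightarrow> om (cs_sum A f N) = (\<Sum>l<N. om (f l))"
proof (induct N)
  case 0 thus ?case by (simp add: om_zr)
next
  case (Suc N)
  have "cs_sum A f N \<in> I" using Suc.prems by (intro cs_sum_K[OF I]) auto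
  thus ?case using Suc by (simp add: om_add)
qed

lemma contra: assumes wpi: "n_weakly_purely_infinite A n" shows False
proof -
  define a where "a = mu (st p) p"
  have aX: "a \<in> X" using pX by (simp add: a_def)
  have aI: "a \<in> I" using pI pX by (simp add: a_def I_multl)
  have pos: "cs_pos A a" unfolding cs_pos_def using aX pX a_def by blast
  have "cuntz_le A (n+1) (diag_rep A (n+1) a) (diag_rep A n a)"
    using wpi pos unfolding n_weakly_purely_infinite_def cuntz_eq_def by blast
  then obtain R where Rin: "\<And>k. mat_in A (n+1) (R k)"
    and Rlim: "mat_lim A (n+1) (\<lambda>k. mat_mult A (n+1) (mat_mult A (n+1) (R k) (diag_rep A n a)) (mat_adj A (R k)))
                 (diag_rep A (n+1) a)"
    unfolding cuntz_le_def by blast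
  have RX: "R k i j \<in> X" if "i < n+1" "j < n+1" for k i j using Rin[of k] that unfolding mat_in_def by blast
  define E where "E k i j = mat_mult A (n+1) (mat_mult A (n+1) (R k) (diag_rep A n a)) (mat_adj A (R k)) i j"
    for k i j
  define T where "T k i j m = (if m < n then mu (mu (R k i m) a) (st (R k j m)) else zr)" for k i j m
  have inner: "cs_sum A (\<lambda>l. mu (R k i l) (diag_rep A n a l m)) (n+1) = (if m < n then mu (R k i m) a else zr)"
    if i: "i < n+1" and m: "m < n+1" for k i m
  proof (cases "m < n")
    case True
    have "cs_sum A (\<lambda>l. mu (R k i l) (diag_rep A n a l m)) (n+1) = mu (R k i m) (diag_rep A n a m m)"
      by (rule cs_sum_single) (use m i RX aX True in \<open>auto simp: diag_rep_def\<close>)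
    thus ?thesis using True by (simp add: diag_rep_def)
  next
    case False
    have "cs_sum A (\<lambda>l. mu (R k i l) (diag_rep A n a l m)) (n+1) = zr"
      by (rule cs_sum_zero) (use i RX False in \<open>auto simp: diag_rep_def\<close>)
    thus ?thesis using False by simp
  qed
  have Eeq: "E k i j = cs_sum A (T k i j) (n+1)" if i: "i < n+1" and j: "j < n+1" for k i j
    unfolding E_def mat_mult_def mat_adj_def
  proof (rule cs_sum_cong)
    fix m assume m: "m < n+1"
    show "mu (cs_sum A (\<lambda>l. mu (R k i l) (diag_rep A n a l m)) (n+1)) (st (R k j m)) = T k i j m"
      using inner[OF i m] RX[OF j m] by (simp add: T_def)
  qed
  have TI: "T k i j m \<in> I" if "i < n+1" "j < n+1" "m < n+1" for k i j m
    using that RX aI zr_J JX by (simp add: T_def I_multl I_multr)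
  have EI: "E k i j \<in> I" if "i < n+1" "j < n+1" for k i j
    unfolding Eeq[OF that] using TI[OF that] by (intro cs_sum_K[OF I]) auto
  define \<gamma> where "\<gamma> k i m = om (mu (R k i m) (st p))" for k i m
  define \<beta> where "\<beta> k j m = om (mu p (st (R k j m)))" for k j m
  define G where "G k i j = om (E k i j)" for k i j
  have Geq: "G k i j = (\<Sum>m<n. \<gamma> k i m * \<beta> k j m)" if i: "i \<le> n" and j: "j \<le> n" for k i j
  proof -
    have i': "i < n+1" and j': "j < n+1" using i j by auto
    have "G k i j = (\<Sum>m<n+1. om (T k i j m))"
      unfolding G_def Eeq[OF i' j'] using TI[OF i' j'] by (intro om_sum) auto
    also have "\<dots> = (\<Sum>m<n. om (T k i j m))" by (simp add: T_def om_zr)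
    also have "\<dots> = (\<Sum>m<n. \<gamma> k i m * \<beta> k j m)"
    proof (rule sum.cong)
      fix m assume m: "m \<in> {..<n}"
      have X3: "R k i m \<in> X" "R k j m \<in> X" using RX i' j' m by auto
      have "T k i j m = mu (mu (R k i m) (st p)) (mu p (st (R k j m)))"
        using m X3 pX by (simp add: T_def a_def mult_assoc)
      thus "om (T k i j m) = \<gamma> k i m * \<beta> k j m" using factor[OF X3] by (simp add: \<gamma>_def \<beta>_def)
    qed simp
    finally show ?thesis .
  qed
  have Glim: "(\<lambda>k. G k i j) \<longlonglongrightarrow> (if i = j then 1 else 0)" if i: "i \<le> n" and j: "j \<le> n" for i j
  proof -
    have i': "i < n+1" and j': "j < n+1" using i j by auto
    define D where "D = diag_rep A (n+1) a i j"
    have DI: "D \<in> I" using aI zr_J JX by (simp add: D_def diag_rep_def)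
    have omD: "om D = (if i = j then 1 else 0)" using i' om_a om_zr by (simp add: D_def diag_rep_def a_def)
    have cl: "cs_lim A (\<lambda>k. E k i j) D" using Rlim i' j' unfolding mat_lim_def E_def D_def by blast
    hence d0: "(\<lambda>k. nm (sb (E k i j) D)) \<longlonglongrightarrow> 0" by (simp add: lim_def')
    have b: "(\<lambda>k. nm p * nm p * nm (sb (E k i j) D)) \<longlonglongrightarrow> 0"
      using tendsto_mult_right_zero[OF d0] by simp
    have "(\<lambda>k. cmod (G k i j - om D)) \<longlonglongrightarrow> 0"
    proof (rule tendsto_sandwich[OF _ _ tendsto_const b])
      show "\<forall>\<^sub>F k in sequentially. 0 \<le> cmod (G k i j - om D)" by simp
      show "\<forall>\<^sub>F k in sequentially. cmod (G k i j - om D) \<le> nm p * nm p * nm (sb (E k i j) D)"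
      proof (rule always_eventually, rule allI)
        fix k
        have "G k i j - om D = om (sb (E k i j) D)" using EI[OF i' j'] DI by (simp add: G_def om_sub)
        thus "cmod (G k i j - om D) \<le> nm p * nm p * nm (sb (E k i j) D)"
          using om_bound[of "sb (E k i j) D"] EI[OF i' j'] DI I by (simp add: ci_sb)
      qed
    qed
    hence "(\<lambda>k. G k i j - om D) \<longlonglongrightarrow> 0" by (simp add: tendsto_norm_zero_iff)
    hence "(\<lambda>k. (G k i j - om D) + om D) \<longlonglongrightarrow> 0 + om D" by (intro tendsto_add) auto
    thus ?thesis using omD by simp
  qed
  show False using final_contra[of n G \<gamma> \<beta>] Geq Glim by blast
qed

end

theorem proposition2p19:
  fixes A :: "'a cstar_data"
  assumes "cstar_algebra A"
    and "weakly_purely_infinite A"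
  shows "nowhere_scattered TYPE('h) A"
proof -
  interpret cs A using assms(1) by unfold_locales
  obtain n where n: "n_weakly_purely_infinite A n" using assms(2) unfolding weakly_purely_infinite_def by blast
  show ?thesis unfolding nowhere_scattered_def
  proof (intro allI impI notI)
    fix I J assume IJ: "closed_ideal A I \<and> closed_ideal A J \<and> J \<subseteq> I \<and> I \<noteq> J"
    assume "\<exists>(H :: 'h hilbert_data) \<phi>. hilbert_space H \<and> quotient_iso_compacts A I J H \<phi>"
    then obtain H :: "'h hilbert_data" and \<phi> where H: "hilbert_space H" and q: "quotient_iso_compacts A I J H \<phi>"
      by blast
    interpret mainctx A H I J \<phi> using H q IJ assms(1) by unfold_locales auto
    obtain e where e: "e \<in> HX" "ip e e = 1" using unit_exists by blast
    obtain p where p: "p \<in> I" "\<And>x. x \<in> HX \<Longrightarrow> \<phi> p x = Pr e x" using q_surj[OF Pr_compact[OF e]] by blast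
    interpret mainctx2 A H I J \<phi> e p using e p by unfold_locales auto
    show False using contra[OF n] .
  qed
qed

end
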